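(* Let $G$ and $H$ be Hilbert spaces, let $S:G\to H$ be a linear isomorphism, and let $F\subset G$ be a quasi-normed space such that the embedding $F\hookrightarrow G$ is compact. Then for all $C\ge1$ and all $n\in\mathbb N$, $$ e^{\rm cont}_{4n+1}(S,F,H)\le 2C\,\|S\|^2\,\|S^{-1}\|^2\, e^{\rm non}_{n,C}(S,F,H). $$
   Context: For a map $S_n:F\to H$, $e(S_n,F,H)=\sup_{\|f\|_F\le1}\|Sf-S_n(f)\|_H$. Manifold widths: $e^{\rm cont}_n(S,F,H)=\inf e(\varphi_n\circ N_n,F,H)$ over all continuous $N_n:F\to\mathbb R^n$ and continuous $\varphi_n:\mathbb R^n\to H$. A sequence $\mathcal B=\{h_1,h_2,\dots\}\subset H$ is a Riesz basis if finite linear combinations are dense and $A(\sum|\alpha_k|^2)^{1/2}\le\|\sum\alpha_kh_k\|_H\le B(\sum|\alpha_k|^2)^{1/2}$ for all finitely supported sequences, with $A,B$ the optimal constants; $\mathcal B_C$ is the set of Riesz bases of $H$ with $B/A\le C$. $\sigma_n(u,\mathcal B)_H=\inf_{i_1,\dots,i_n}\inf_{c_1,\dots,c_n}\|u-\sum_{k=1}^nc_kh_{i_k}\|_H$. Nonlinear widths: $e^{\rm non}_{n,C}(S,F,H)=\inf_{\mathcal B\in\mathcal B_C}\sup_{\|f\|_F\le1}\sigma_n(Sf,\mathcal B)_H$ (equivalently, infimum over $\mathcal B\in\mathcal B_C$ and over arbitrary maps $S_n(f)=\sum_{k=1}^nc_kh_{i_k}$ with $c_k,i_k$ depending arbitrarily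 on $f$, of $e(S_n,F,H)$). *)

theory Defs
  imports "HOL-Analysis.Analysis"
begin

text \<open>Quasi-normed subspace F of G with quasi-norm qn (only its values on F matter).\<close>
definition is_quasinormed_subspace :: "'g::real_vector set \<Rightarrow> ('g \<Rightarrow> real) \<Rightarrow> bool" where
  "is_quasinormed_subspace F qn \<longleftrightarrow>
     subspace F \<and>
     (\<forall>x\<in>F. qn x \<ge> 0) \<and>
     (\<forall>x\<in>F. qn x = 0 \<longleftrightarrow> x = 0) \<and>
     (\<forall>c. \<forall>x\<in>F. qn (c *\<^sub>R x) = \<bar>c\<bar> * qn x) \<and>
     (\<exists>K\<ge>1. \<forall>x\<in>F. \<forall>y\<in>F. qn (x + y) \<le> K * (qn x + qn y))"

definition unit_ball_F :: "'g set \<Rightarrow> ('g \<Rightarrow> real) \<Rightarrow> 'g set" where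
  "unit_ball_F F qn = {f \<in> F. qn f \<le> 1}"

definition compact_embedding :: "'g::metric_space set \<Rightarrow> ('g \<Rightarrow> real) \<Rightarrow> bool" where
  "compact_embedding F qn \<longleftrightarrow> compact (closure (unit_ball_F F qn))"

text \<open>R^m is represented by the vectors x :: nat => real with x i = 0 for i >= m,
  with the Euclidean norm.\<close>
definition Rvecs :: "nat \<Rightarrow> (nat \<Rightarrow> real) set" where
  "Rvecs m = {x. \<forall>i\<ge>m. x i = 0}"

definition Rnorm :: "nat \<Rightarrow> (nat \<Rightarrow> real) \<Rightarrow> real" where
  "Rnorm m x = sqrt (\<Sum>i<m. (x i)\<^sup>2)"

definition cont_F_Rm :: "'g::real_vector set \<Rightarrow> ('g \<Rightarrow> real) \<Rightarrow> nat \<Rightarrow> ('g \<Rightarrow> (nat \<Rightarrow> real)) \<Rightarrow> bool" where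
  "cont_F_Rm F qn m N \<longleftrightarrow> (\<forall>x\<in>F. N x \<in> Rvecs m) \<and>
     (\<forall>x\<in>F. \<forall>\<epsilon>>0. \<exists>\<delta>>0. \<forall>y\<in>F. qn (y - x) < \<delta> \<longrightarrow> Rnorm m (N y - N x) < \<epsilon>)"

definition cont_Rm_H :: "nat \<Rightarrow> ((nat \<Rightarrow> real) \<Rightarrow> 'h::real_normed_vector) \<Rightarrow> bool" where
  "cont_Rm_H m \<phi> \<longleftrightarrow>
     (\<forall>x\<in>Rvecs m. \<forall>\<epsilon>>0. \<exists>\<delta>>0. \<forall>y\<in>Rvecs m. Rnorm m (y - x) < \<delta> \<longrightarrow> norm (\<phi> y - \<phi> x) < \<epsilon>)"

definition err :: "('g \<Rightarrow> 'h::real_normed_vector) \<Rightarrow> ('g \<Rightarrow> 'h) \<Rightarrow> 'g set \<Rightarrow> ('g \<Rightarrow> real) \<Rightarrow> ereal" where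
  "err S Sn F qn = (SUP f\<in>unit_ball_F F qn. ereal (norm (S f - Sn f)))"

definition e_cont :: "nat \<Rightarrow> ('g::real_vector \<Rightarrow> 'h::real_normed_vector) \<Rightarrow> 'g set \<Rightarrow> ('g \<Rightarrow> real) \<Rightarrow> ereal" where
  "e_cont m S F qn = (INF (N, \<phi>)\<in>{(N, \<phi>). cont_F_Rm F qn m N \<and> cont_Rm_H m \<phi>}. err S (\<phi> \<circ> N) F qn)"

definition riesz_ratios :: "(nat \<Rightarrow> 'h::real_normed_vector) \<Rightarrow> real set" where
  "riesz_ratios h = {norm (\<Sum>k\<in>I. a k *\<^sub>R h k) / sqrt (\<Sum>k\<in>I. (a k)\<^sup>2) | a I.
      finite I \<and> (\<exists>k\<in>I. a k \<noteq> 0)}"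

definition riesz_A :: "(nat \<Rightarrow> 'h::real_normed_vector) \<Rightarrow> real" where
  "riesz_A h = Inf (riesz_ratios h)"

definition riesz_B :: "(nat \<Rightarrow> 'h::real_normed_vector) \<Rightarrow> real" where
  "riesz_B h = Sup (riesz_ratios h)"

definition is_riesz_basis :: "(nat \<Rightarrow> 'h::real_normed_vector) \<Rightarrow> bool" where
  "is_riesz_basis h \<longleftrightarrow> closure (span (range h)) = UNIV \<and>
     bdd_above (riesz_ratios h) \<and> riesz_A h > 0"

definition riesz_bases_C :: "real \<Rightarrow> (nat \<Rightarrow> 'h::real_normed_vector) set" where
  "riesz_bases_C C = {h. is_riesz_basis h \<and> riesz_B h / riesz_A h \<le> C}"

definition sigma_n :: "nat \<Rightarrow> (nat \<Rightarrow> 'h::real_normed_vector) \<Rightarrow> 'h \<Rightarrow> real" where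
  "sigma_n n h u = Inf {norm (u - (\<Sum>k<n. c k *\<^sub>R h (i k))) | c i. True}"

definition e_non :: "nat \<Rightarrow> real \<Rightarrow> ('g \<Rightarrow> 'h::real_normed_vector) \<Rightarrow> 'g set \<Rightarrow> ('g \<Rightarrow> real) \<Rightarrow> ereal" where
  "e_non n C S F qn = (INF h\<in>riesz_bases_C C. SUP f\<in>unit_ball_F F qn. ereal (sigma_n n h (S f)))"

end

theory Submission
  imports Defs "HOL-Computational_Algebra.Polynomial"
begin



lemma psum_split: "(m::nat) \<le> n \<Longrightarrow> (\<Sum>i<n. g i) = (\<Sum>i<m. g i) + (\<Sum>i\<in>{m..<n}. (g i :: 'a::comm_monoid_add))"
proof -
  assume mn: "m \<le> n"
  have "sum g {0..<m} + sum g {m..<n} = sum g {0..<n}" using mn by (intro sum.atLeastLessThan_concat) auto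
  then show ?thesis by (simp add: atLeast0LessThan)
qed

lemma psum_dist_le:
  fixes f :: "nat \<Rightarrow> 'a::real_normed_vector"
  shows "dist (\<Sum>i<m. f i) (\<Sum>i<n. f i) \<le> dist (\<Sum>i<m. norm (f i)) (\<Sum>i<n. norm (f i))"
proof -
  have key: "dist (\<Sum>i<m. f i) (\<Sum>i<n. f i) \<le> dist (\<Sum>i<m. norm (f i)) (\<Sum>i<n. norm (f i))"
    if mn: "m \<le> n" for m n
  proof -
    have "dist (\<Sum>i<m. f i) (\<Sum>i<n. f i) = norm (\<Sum>i\<in>{m..<n}. f i)"
      using psum_split[OF mn, of f] by (simp add: dist_norm norm_minus_commute)
    also have "\<dots> \<le> (\<Sum>i\<in>{m..<n}. norm (f i))" by (rule norm_sum)
    also have "\<dots> = dist (\<Sum>i<m. norm (f i)) (\<Sum>i<n. norm (f i))"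
      using psum_split[OF mn, of "\<lambda>i. norm (f i)"] by (simp add: dist_real_def sum_nonneg)
    finally show ?thesis .
  qed
  show ?thesis
  proof (cases "m \<le> n")
    case True then show ?thesis by (rule key)
  next
    case False then have "n \<le> m" by simp
    from key[OF this] show ?thesis by (simp add: dist_commute)
  qed
qed

lemma my_summable_norm_cancel:
  fixes f :: "nat \<Rightarrow> 'a::{real_normed_vector,complete_space}"
  assumes s: "summable (\<lambda>n. norm (f n))" shows "summable f"
proof -
  have "Cauchy (\<lambda>n. \<Sum>i<n. norm (f i))"
    using s by (simp add: summable_iff_convergent Cauchy_convergent_iff)
  then have "Cauchy (\<lambda>n. \<Sum>i<n. f i)"
  proof (intro metric_CauchyI)
    fix e :: real assume "Cauchy (\<lambda>n. \<Sum>i<n. norm (f i))" "0 < e"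
    from metric_CauchyD[OF this] obtain M where M: "\<forall>m\<ge>M. \<forall>n\<ge>M. dist (\<Sum>i<m. norm (f i)) (\<Sum>i<n. norm (f i)) < e"
      by blast
    show "\<exists>M. \<forall>m\<ge>M. \<forall>n\<ge>M. dist (\<Sum>i<m. f i) (\<Sum>i<n. f i) < e"
    proof (intro exI allI impI)
      fix m n assume "m \<ge> M" "n \<ge> M"
      then have "dist (\<Sum>i<m. norm (f i)) (\<Sum>i<n. norm (f i)) < e" using M by blast
      then show "dist (\<Sum>i<m. f i) (\<Sum>i<n. f i) < e" using psum_dist_le[where f=f and m=m and n=n] by linarith
    qed
  qed
  then have "convergent (\<lambda>n. \<Sum>i<n. f i)" by (rule Cauchy_convergent)
  then show ?thesis by (simp add: summable_iff_convergent)
qed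

lemma my_summable_norm:
  fixes f :: "nat \<Rightarrow> 'a::{real_normed_vector,complete_space}"
  assumes s: "summable (\<lambda>n. norm (f n))" shows "norm (suminf f) \<le> (\<Sum>n. norm (f n))"
proof (rule LIMSEQ_le)
  show "(\<lambda>n. norm (\<Sum>i<n. f i)) \<longlonglongrightarrow> norm (suminf f)"
    by (rule tendsto_norm, rule summable_LIMSEQ, rule my_summable_norm_cancel, rule s)
  show "(\<lambda>n. \<Sum>i<n. norm (f i)) \<longlonglongrightarrow> (\<Sum>n. norm (f n))"
    by (rule summable_LIMSEQ, rule s)
  show "\<exists>N. \<forall>n\<ge>N. norm (\<Sum>i<n. f i) \<le> (\<Sum>i<n. norm (f i))"
    by (intro exI allI impI norm_sum)
qed

lemma bounded_inverse_aux:
  fixes S :: "'a::{real_normed_vector,complete_space} \<Rightarrow> 'b::{real_normed_vector,complete_space}"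
  assumes bl: "bounded_linear S" and bij: "bij S"
  shows "\<exists>K. \<forall>y. norm (inv S y) \<le> K * norm y"
proof -
  interpret S: bounded_linear S by fact
  define Cl where "Cl k = closure (S ` cball 0 (real k))" for k :: nat
  have cov: "(\<Union>k. Cl k) = UNIV"
  proof -
    have "y \<in> (\<Union>k. Cl k)" for y
    proof -
      obtain x where x: "y = S x" using bij by (metis bij_def surj_def)
      obtain k::nat where "norm x \<le> real k" using real_arch_simple by blast
      hence "y \<in> Cl k" unfolding Cl_def using closure_subset x by fastforce
      thus ?thesis by blast
    qed
    thus ?thesis by blast
  qed
  have "\<exists>k. interior (Cl k) \<noteq> {}"
  proof (rule ccontr)
    assume "\<not> ?thesis"
    then have "euclidean interior_of (\<Union>(range Cl)) = {}"
      by (intro Baire_category_alt) (auto simp: completely_metrizable_space_euclidean Cl_def euclidean_interior_of)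
    then show False using cov by (simp add: euclidean_interior_of)
  qed
  then obtain k y0 where "y0 \<in> interior (Cl k)" by blast
  then obtain r where r: "r > 0" "ball y0 r \<subseteq> Cl k"
    by (meson interior_subset open_contains_ball_eq open_interior subset_trans)
  have step1: "\<exists>x. norm x \<le> 2 * real k \<and> norm (y - S x) < e" if y: "norm y < r" and e: "e > 0" for y e
  proof -
    have "y0 + y \<in> Cl k" using r y by (intro subsetD[OF r(2)]) (simp add: dist_norm)
    then obtain x1 where x1: "x1 \<in> cball 0 (real k)" "dist (S x1) (y0+y) < e/2"
      unfolding Cl_def closure_approachable using e by (metis half_gt_zero imageE)
    have "y0 \<in> Cl k" using r by (intro subsetD[OF r(2)]) simp
    then obtain x2 where x2: "x2 \<in> cball 0 (real k)" "dist (S x2) y0 < e/2"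
      unfolding Cl_def closure_approachable using e by (metis half_gt_zero imageE)
    have "norm (x1 - x2) \<le> 2 * real k"
      using x1 x2 norm_triangle_ineq4[of x1 x2] by simp
    moreover have "norm (y - S (x1 - x2)) < e"
    proof -
      have "y - S (x1 - x2) = (y0 + y - S x1) - (y0 - S x2)" by (simp add: S.diff algebra_simps)
      also have "norm \<dots> \<le> norm (y0 + y - S x1) + norm (y0 - S x2)" by (rule norm_triangle_ineq4)
      also have "\<dots> < e" using x1 x2 by (simp add: dist_norm norm_minus_commute)
      finally show ?thesis .
    qed
    ultimately show ?thesis by blast
  qed
  define M where "M = 4 * real k / r"
  have M0: "M \<ge> 0" using r by (simp add: M_def)
  have step2: "\<exists>x. norm x \<le> M * norm y \<and> norm (y - S x) \<le> norm y / 2" for y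
  proof (cases "y = 0")
    case True then show ?thesis by (intro exI[of _ 0]) (simp add: M_def)
  next
    case False
    define s where "s = r / (2 * norm y)"
    have s0: "s > 0" using r False by (simp add: s_def)
    have "norm (s *\<^sub>R y) < r" using r False s0 by (simp add: s_def)
    moreover have "s * norm y / 2 > 0" using s0 False by simp
    ultimately obtain x' where x': "norm x' \<le> 2 * real k" "norm (s *\<^sub>R y - S x') < s * norm y / 2"
      using step1 by blast
    define x where "x = (1/s) *\<^sub>R x'"
    have "norm x = norm x' / s" using s0 by (simp add: x_def)
    also have "\<dots> \<le> 2 * real k / s" using x' s0 by (simp add: divide_right_mono)
    also have "\<dots> = M * norm y" using r False by (simp add: s_def M_def field_simps)
    finally have nx: "norm x \<le> M * norm y" .
    have "y - S x = (1/s) *\<^sub>R (s *\<^sub>R y - S x')" using s0 by (simp add: x_def S.scaleR algebra_simps)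
    hence "norm (y - S x) = norm (s *\<^sub>R y - S x') / s" using s0 by simp
    also have "\<dots> \<le> norm y / 2" using x' s0 by (simp add: pos_divide_le_eq mult.commute)
    finally show ?thesis using nx by blast
  qed
  obtain pick where pick: "\<And>y. norm (pick y) \<le> M * norm y" "\<And>y. norm (y - S (pick y)) \<le> norm y / 2"
    using step2 by metis
  have bound: "norm (inv S y) \<le> 2 * M * norm y" for y
  proof -
    define z where "z = rec_nat y (\<lambda>_ z. z - S (pick z))"
    have z0: "z 0 = y" and zS: "\<And>n. z (Suc n) = z n - S (pick (z n))" by (simp_all add: z_def)
    define x where "x n = pick (z n)" for n
    have zn: "norm (z n) \<le> norm y / 2^n" for n
    proof (induction n)
      case 0 then show ?case by (simp add: z0)
    next
      case (Suc n)
      have "norm (z (Suc n)) \<le> norm (z n) / 2" using pick(2) by (simp add: zS)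
      also have "\<dots> \<le> norm y / 2 ^ Suc n" using Suc by (simp add: divide_right_mono)
      finally show ?case .
    qed
    have xn: "norm (x n) \<le> M * norm y * (1/2)^n" for n
    proof -
      have "norm (x n) \<le> M * norm (z n)" using pick(1) by (simp add: x_def)
      also have "\<dots> \<le> M * (norm y / 2^n)" using zn[of n] M0 by (rule mult_left_mono)
      also have "M * (norm y / 2^n) = M * norm y * (1/2)^n" by (simp add: power_one_over)
      finally show ?thesis .
    qed
    have partial: "y - S (\<Sum>i<n. x i) = z n" for n
    proof (induction n)
      case 0 then show ?case by (simp add: z0)
    next
      case (Suc n)
      have "y - S (\<Sum>i<Suc n. x i) = (y - S (\<Sum>i<n. x i)) - S (x n)" by (simp add: S.add)
      also have "\<dots> = z (Suc n)" using Suc by (simp add: zS x_def)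
      finally show ?case .
    qed
    have sg: "summable (\<lambda>n. M * norm y * (1/2::real)^n)"
      by (rule summable_mult, rule summable_geometric) simp
    have sn: "summable (\<lambda>n. norm (x n))"
    proof (rule summable_comparison_test[OF _ sg])
      show "\<exists>N. \<forall>n\<ge>N. norm (norm (x n)) \<le> M * norm y * (1/2)^n" using xn by simp
    qed
    have sx: "summable x" using sn by (rule my_summable_norm_cancel)
    have l1: "(\<lambda>n. S (\<Sum>i<n. x i)) \<longlonglongrightarrow> S (suminf x)"
      using summable_LIMSEQ[OF sx] by (rule S.tendsto)
    have "(\<lambda>n. z n) \<longlonglongrightarrow> 0"
    proof (rule Lim_null_comparison)
      show "\<forall>\<^sub>F n in sequentially. norm (z n) \<le> norm y * (1/2)^n"
      proof (rule always_eventually, rule allI)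
        fix n
        have "norm y / 2^n = norm y * (1/2)^n" by (simp add: power_one_over)
        then show "norm (z n) \<le> norm y * (1/2)^n" using zn[of n] by simp
      qed
      show "(\<lambda>n. norm y * (1/2::real)^n) \<longlonglongrightarrow> 0"
        by (rule tendsto_mult_right_zero, rule LIMSEQ_power_zero) simp
    qed
    hence "(\<lambda>n. y - z n) \<longlonglongrightarrow> y - 0" by (rule tendsto_diff[OF tendsto_const])
    moreover have eqf: "(\<lambda>n. S (\<Sum>i<n. x i)) = (\<lambda>n. y - z n)"
    proof
      fix n
      have "y - z n = y - (y - S (\<Sum>i<n. x i))" using partial[of n] by simp
      also have "\<dots> = S (\<Sum>i<n. x i)" by simp
      finally show "S (\<Sum>i<n. x i) = y - z n" by simp
    qed
    ultimately have "(\<lambda>n. S (\<Sum>i<n. x i)) \<longlonglongrightarrow> y" unfolding eqf by simp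
    then have "S (suminf x) = y" by (rule LIMSEQ_unique[OF l1])
    hence "inv S y = suminf x" by (rule inv_f_eq[OF bij_is_inj[OF bij]])
    hence "norm (inv S y) \<le> (\<Sum>n. norm (x n))" using my_summable_norm[OF sn] by (simp only:)
    also have "\<dots> \<le> (\<Sum>n. M * norm y * (1/2)^n)" by (rule suminf_le[OF xn sn sg])
    also have "\<dots> = M * norm y * (\<Sum>n. (1/2::real)^n)"
      by (rule suminf_mult) (rule summable_geometric, simp)
    also have "(\<Sum>n. (1/2::real)^n) = 2" using suminf_geometric[of "1/2::real"] by simp
    finally show ?thesis by simp
  qed
  thus ?thesis by blast
qed

lemma bounded_linear_inverse:
  fixes S :: "'a::{real_normed_vector,complete_space} \<Rightarrow> 'b::{real_normed_vector,complete_space}"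
  assumes bl: "bounded_linear S" and bij: "bij S"
  shows "bounded_linear (inv S)"
proof -
  interpret S: bounded_linear S by fact
  obtain K where K: "\<And>y. norm (inv S y) \<le> K * norm y" using bounded_inverse_aux[OF assms] by blast
  have inj: "inj S" using bij bij_is_inj by blast
  have sinv: "S (inv S y) = y" for y using bij by (simp add: bij_is_surj surj_f_inv_f)
  show ?thesis
  proof (rule bounded_linear_intro)
    show "inv S (x + y) = inv S x + inv S y" for x y
      by (rule inv_f_eq[OF inj]) (simp add: S.add sinv)
    show "inv S (r *\<^sub>R x) = r *\<^sub>R inv S x" for r x
      by (rule inv_f_eq[OF inj]) (simp add: S.scaleR sinv)
    show "norm (inv S x) \<le> norm x * K" for x using K[of x] by (simp add: mult.commute)
  qed
qed



lemma proj_exists: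
  fixes V :: "'a::real_inner set"
  assumes "finite V"
  shows "\<exists>Q. linear Q \<and> (\<forall>u. Q u \<in> span V) \<and> (\<forall>u. \<forall>w\<in>span V. inner (u - Q u) w = 0)"
  using assms
proof (induction V rule: finite_induct)
  case empty
  show ?case by (intro exI[of _ "\<lambda>_. 0"]) (auto simp: linear_zero)
next
  case (insert v V)
  then obtain Q where Q: "linear Q" "\<And>u. Q u \<in> span V" "\<And>u w. w \<in> span V \<Longrightarrow> inner (u - Q u) w = 0"
    by blast
  define r where "r = v - Q v"
  show ?case
  proof (cases "r = 0")
    case True
    then have "v = Q v" by (simp add: r_def)
    then have "v \<in> span V" using Q(2) by metis
    then have "span (insert v V) = span V" by (rule span_redundant)
    then show ?thesis using Q by auto
  next
    case False
    define Q' where "Q' u = Q u + (inner r u / inner r r) *\<^sub>R r" for u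
    interpret lq: linear Q by fact
    have rr: "inner r r \<noteq> 0" using False by simp
    have lin: "linear Q'"
      by (rule linearI) (simp_all add: Q'_def lq.add lq.scale inner_add_right add_divide_distrib scaleR_add_left algebra_simps)
    have rin: "r \<in> span (insert v V)"
    proof -
      have "v \<in> span (insert v V)" by (simp add: span_base)
      moreover have "Q v \<in> span (insert v V)" using Q(2) span_mono[of V "insert v V"] by blast
      ultimately show ?thesis unfolding r_def by (rule span_diff)
    qed
    have sp: "Q' u \<in> span (insert v V)" for u
      unfolding Q'_def by (intro span_add span_scale rin) (auto intro: subsetD[OF span_mono[of V "insert v V"]] Q(2))
    have r_orth: "inner r w = 0" if "w \<in> span V" for w
      using Q(3)[OF that, of v] by (simp add: r_def)
    have orth: "inner (u - Q' u) w = 0" if w: "w \<in> span (insert v V)" for u w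
    proof -
      obtain k where k: "w - k *\<^sub>R v \<in> span V" using w span_breakdown_eq by blast
      define w2 where "w2 = w - k *\<^sub>R v + k *\<^sub>R Q v"
      have w2: "w2 \<in> span V" unfolding w2_def by (intro span_add span_scale k Q(2))
      have weq: "w = w2 + k *\<^sub>R r" by (simp add: w2_def r_def algebra_simps)
      have a1: "inner (u - Q u) w2 = 0" using Q(3)[OF w2] .
      have a2: "inner r w2 = 0" using r_orth[OF w2] .
      have a3: "inner r (Q u) = 0" using r_orth[OF Q(2)] .
      have a4: "inner (u - Q u) r = inner u r" using a3 by (simp add: inner_diff_left inner_diff_right inner_commute)
      have "inner (u - Q' u) w = inner (u - Q u) w2 - (inner r u / inner r r) * inner r w2
           + k * (inner (u - Q u) r - (inner r u / inner r r) * inner r r)"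
        by (simp add: weq Q'_def inner_add_right inner_diff_left inner_diff_right algebra_simps)
      also have "\<dots> = 0" using a1 a2 a4 rr by (simp add: inner_commute)
      finally show ?thesis .
    qed
    show ?thesis using lin sp orth by blast
  qed
qed

lemma proj_pyth:
  fixes Q :: "'a::real_inner \<Rightarrow> 'a"
  assumes "Q u \<in> span V" "\<forall>w\<in>span V. inner (u - Q u) w = 0" "w \<in> span V"
  shows "(norm (u - w))\<^sup>2 = (norm (u - Q u))\<^sup>2 + (norm (Q u - w))\<^sup>2"
proof -
  have "Q u - w \<in> span V" using assms by (intro span_diff)
  then have "orthogonal (u - Q u) (Q u - w)" using assms(2) by (simp add: orthogonal_def)
  then have "(norm ((u - Q u) + (Q u - w)))\<^sup>2 = (norm (u - Q u))\<^sup>2 + (norm (Q u - w))\<^sup>2"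
    by (rule norm_add_Pythagorean)
  then show ?thesis by simp
qed

lemma riesz_ratios_nonneg: "x \<in> riesz_ratios h \<Longrightarrow> x \<ge> 0"
  unfolding riesz_ratios_def by (auto intro!: divide_nonneg_nonneg sum_nonneg)

lemma riesz_lower:
  assumes "is_riesz_basis h" "finite I"
  shows "riesz_A h * L2_set a I \<le> norm (\<Sum>k\<in>I. a k *\<^sub>R h k)"
proof (cases "\<exists>k\<in>I. a k \<noteq> 0")
  case False
  then show ?thesis by (simp add: L2_set_0')
next
  case True
  have "L2_set a I \<noteq> 0" using True assms(2) by (simp add: L2_set_eq_0_iff)
  then have pos: "L2_set a I > 0" using L2_set_nonneg[of a I] by linarith
  have mem: "norm (\<Sum>k\<in>I. a k *\<^sub>R h k) / L2_set a I \<in> riesz_ratios h"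
    unfolding riesz_ratios_def L2_set_def using True assms(2) by blast
  have "riesz_A h \<le> norm (\<Sum>k\<in>I. a k *\<^sub>R h k) / L2_set a I"
    unfolding riesz_A_def by (rule cInf_lower[OF mem]) (auto simp: bdd_below_def intro: riesz_ratios_nonneg)
  then show ?thesis using pos by (simp add: pos_le_divide_eq)
qed

lemma riesz_upper:
  assumes "is_riesz_basis h" "finite I"
  shows "norm (\<Sum>k\<in>I. a k *\<^sub>R h k) \<le> riesz_B h * L2_set a I"
proof (cases "\<exists>k\<in>I. a k \<noteq> 0")
  case False
  then show ?thesis by (simp add: L2_set_0')
next
  case True
  have "L2_set a I \<noteq> 0" using True assms(2) by (simp add: L2_set_eq_0_iff)
  then have pos: "L2_set a I > 0" using L2_set_nonneg[of a I] by linarith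
  have mem: "norm (\<Sum>k\<in>I. a k *\<^sub>R h k) / L2_set a I \<in> riesz_ratios h"
    unfolding riesz_ratios_def L2_set_def using True assms(2) by blast
  have "norm (\<Sum>k\<in>I. a k *\<^sub>R h k) / L2_set a I \<le> riesz_B h"
    unfolding riesz_B_def by (rule cSup_upper[OF mem]) (use assms(1) in \<open>simp add: is_riesz_basis_def\<close>)
  then show ?thesis using pos by (simp add: pos_divide_le_eq mult.commute)
qed

lemma riesz_A_le_B:
  assumes "is_riesz_basis h" shows "riesz_A h \<le> riesz_B h"
proof -
  have ne: "riesz_ratios h \<noteq> {}"
  proof -
    have "norm (\<Sum>k\<in>{0::nat}. (\<lambda>_. 1::real) k *\<^sub>R h k) / sqrt (\<Sum>k\<in>{0}. ((\<lambda>_. 1::real) k)\<^sup>2) \<in> riesz_ratios h"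
      unfolding riesz_ratios_def by (intro CollectI exI[of _ "\<lambda>_::nat. 1::real"] exI[of _ "{0::nat}"]) simp
    thus ?thesis by blast
  qed
  then obtain x where x: "x \<in> riesz_ratios h" by blast
  have "riesz_A h \<le> x" unfolding riesz_A_def
    by (rule cInf_lower[OF x]) (auto simp: bdd_below_def intro: riesz_ratios_nonneg)
  also have "x \<le> riesz_B h" unfolding riesz_B_def
    by (rule cSup_upper[OF x]) (use assms in \<open>simp add: is_riesz_basis_def\<close>)
  finally show ?thesis .
qed



definition tval :: "nat set \<Rightarrow> nat \<Rightarrow> (nat \<Rightarrow> real) \<Rightarrow> real" where
  "tval J r c = Min ((\<lambda>T. Max (insert 0 ((\<lambda>k. \<bar>c k\<bar>) ` (J - T)))) ` {T. T \<subseteq> J \<and> card T \<le> r})"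

definition sthr :: "real \<Rightarrow> real \<Rightarrow> real" where
  "sthr t x = max (x - t) 0 + min (x + t) 0"

lemma tval_fin: "finite J \<Longrightarrow> finite {T. T \<subseteq> J \<and> card T \<le> r}"
  by (rule finite_subset[of _ "Pow J"]) auto

lemma tval_le:
  assumes "finite J" "T \<subseteq> J" "card T \<le> r"
  shows "tval J r c \<le> Max (insert 0 ((\<lambda>k. \<bar>c k\<bar>) ` (J - T)))"
  unfolding tval_def using assms tval_fin[OF assms(1), of r] by (intro Min_le) auto

lemma tval_in:
  assumes "finite J"
  obtains T where "T \<subseteq> J" "card T \<le> r" "tval J r c = Max (insert 0 ((\<lambda>k. \<bar>c k\<bar>) ` (J - T)))"
proof -
  have ne: "{T. T \<subseteq> J \<and> card T \<le> r} \<noteq> {}" proof -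
    have "{} \<in> {T. T \<subseteq> J \<and> card T \<le> r}" by simp
    then show ?thesis by blast
  qed
  have "tval J r c \<in> (\<lambda>T. Max (insert 0 ((\<lambda>k. \<bar>c k\<bar>) ` (J - T)))) ` {T. T \<subseteq> J \<and> card T \<le> r}"
    unfolding tval_def using tval_fin[OF assms, of r] ne by (intro Min_in) auto
  then show ?thesis using that by blast
qed

lemma tval_nonneg: assumes "finite J" shows "tval J r c \<ge> 0"
proof -
  obtain T where T: "tval J r c = Max (insert 0 ((\<lambda>k. \<bar>c k\<bar>) ` (J - T)))"
    using tval_in[OF assms] by metis
  show ?thesis unfolding T using assms by (intro Max_ge) auto
qed

lemma tval_card_gt:
  assumes "finite J"
  shows "card {k\<in>J. \<bar>c k\<bar> > tval J r c} \<le> r"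
proof -
  obtain T where T: "T \<subseteq> J" "card T \<le> r" "tval J r c = Max (insert 0 ((\<lambda>k. \<bar>c k\<bar>) ` (J - T)))"
    using tval_in[OF assms] by metis
  have "{k\<in>J. \<bar>c k\<bar> > tval J r c} \<subseteq> T"
  proof
    fix k assume k: "k \<in> {k\<in>J. \<bar>c k\<bar> > tval J r c}"
    show "k \<in> T"
    proof (rule ccontr)
      assume "k \<notin> T"
      then have "\<bar>c k\<bar> \<le> Max (insert 0 ((\<lambda>k. \<bar>c k\<bar>) ` (J - T)))"
        using k assms by (intro Max_ge) auto
      then show False using k T(3) by simp
    qed
  qed
  then have "card {k\<in>J. \<bar>c k\<bar> > tval J r c} \<le> card T"
    using T(1) assms by (intro card_mono) (auto intro: finite_subset)
  then show ?thesis using T(2) by simp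
qed

lemma tval_card_ge:
  assumes "finite J" "tval J r c > 0"
  shows "card {k\<in>J. \<bar>c k\<bar> \<ge> tval J r c} > r"
proof (rule ccontr)
  let ?G = "{k\<in>J. \<bar>c k\<bar> \<ge> tval J r c}"
  assume "\<not> ?thesis"
  then have "card ?G \<le> r" by simp
  then have "tval J r c \<le> Max (insert 0 ((\<lambda>k. \<bar>c k\<bar>) ` (J - ?G)))"
    using assms by (intro tval_le) auto
  also have "\<dots> < tval J r c"
    using assms by (subst Max_less_iff) auto
  finally show False by simp
qed

lemma tval_lip:
  assumes "finite J" "D \<ge> 0" "\<And>k. k \<in> J \<Longrightarrow> \<bar>c k - c' k\<bar> \<le> D"
  shows "tval J r c \<le> tval J r c' + D"
proof -
  obtain T where T: "T \<subseteq> J" "card T \<le> r" "tval J r c' = Max (insert 0 ((\<lambda>k. \<bar>c' k\<bar>) ` (J - T)))"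
    using tval_in[OF assms(1)] by metis
  have "tval J r c \<le> Max (insert 0 ((\<lambda>k. \<bar>c k\<bar>) ` (J - T)))"
    using T assms by (intro tval_le) auto
  also have "\<dots> \<le> tval J r c' + D"
  proof (subst Max_le_iff, goal_cases)
    case 3
    have "0 \<le> tval J r c'" using tval_nonneg[OF assms(1)] .
    moreover have "\<bar>c k\<bar> \<le> tval J r c' + D" if "k \<in> J - T" for k
    proof -
      have "\<bar>c' k\<bar> \<le> tval J r c'" unfolding T(3) using that assms(1) by (intro Max_ge) auto
      moreover have "\<bar>c k - c' k\<bar> \<le> D" using assms(3) that by auto
      ultimately show ?thesis by linarith
    qed
    ultimately show ?case using assms(2) by auto
  qed (use assms in auto)
  finally show ?thesis .
qed

lemma tval_lip_abs:
  assumes "finite J" "D \<ge> 0" "\<And>k. k \<in> J \<Longrightarrow> \<bar>c k - c' k\<bar> \<le> D"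
  shows "\<bar>tval J r c - tval J r c'\<bar> \<le> D"
proof -
  have "\<bar>c' k - c k\<bar> \<le> D" if "k \<in> J" for k using assms(3)[OF that] by (simp add: abs_minus_commute)
  then have "tval J r c' \<le> tval J r c + D" by (rule tval_lip[OF assms(1,2)])
  moreover have "tval J r c \<le> tval J r c' + D" by (rule tval_lip[OF assms])
  ultimately show ?thesis by linarith
qed

lemma sthr_err_abs: "t \<ge> 0 \<Longrightarrow> \<bar>x - sthr t x\<bar> \<le> \<bar>x\<bar> \<and> \<bar>x - sthr t x\<bar> \<le> t"
  unfolding sthr_def max_def min_def by auto

lemma sthr_err: "t \<ge> 0 \<Longrightarrow> (x - sthr t x)\<^sup>2 \<le> x\<^sup>2 \<and> (x - sthr t x)\<^sup>2 \<le> t\<^sup>2"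
proof -
  assume t: "t \<ge> 0"
  have "\<bar>x - sthr t x\<bar> \<le> \<bar>x\<bar>" "\<bar>x - sthr t x\<bar> \<le> \<bar>t\<bar>" using sthr_err_abs[OF t, of x] t by auto
  then show ?thesis by (simp add: abs_le_square_iff)
qed

lemma sthr_nz: "t \<ge> 0 \<Longrightarrow> sthr t x \<noteq> 0 \<Longrightarrow> \<bar>x\<bar> > t"
  unfolding sthr_def by (auto simp: max_def min_def split: if_splits)

lemma max0_lip: "\<bar>max (a::real) 0 - max b 0\<bar> \<le> \<bar>a - b\<bar>"
  by (simp add: max_def)
lemma min0_lip: "\<bar>min (a::real) 0 - min b 0\<bar> \<le> \<bar>a - b\<bar>"
  by (simp add: min_def)

lemma sthr_lip: "\<bar>sthr t x - sthr t' x'\<bar> \<le> 2 * (\<bar>x - x'\<bar> + \<bar>t - t'\<bar>)"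
proof -
  have "\<bar>sthr t x - sthr t' x'\<bar> \<le> \<bar>max (x - t) 0 - max (x' - t') 0\<bar> + \<bar>min (x + t) 0 - min (x' + t') 0\<bar>"
    unfolding sthr_def by linarith
  also have "\<dots> \<le> \<bar>(x - t) - (x' - t')\<bar> + \<bar>(x + t) - (x' + t')\<bar>"
    by (intro add_mono max0_lip min0_lip)
  also have "\<dots> \<le> 2 * (\<bar>x - x'\<bar> + \<bar>t - t'\<bar>)"
  proof -
    have e1: "(x - t) - (x' - t') = (x - x') - (t - t')" "(x + t) - (x' + t') = (x - x') + (t - t')" by simp_all
    have "\<bar>(x - x') - (t - t')\<bar> \<le> \<bar>x - x'\<bar> + \<bar>t - t'\<bar>" by (rule abs_triangle_ineq4)
    moreover have "\<bar>(x - x') + (t - t')\<bar> \<le> \<bar>x - x'\<bar> + \<bar>t - t'\<bar>" by (rule abs_triangle_ineq)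
    ultimately have "\<bar>(x - x') - (t - t')\<bar> + \<bar>(x - x') + (t - t')\<bar> \<le> (\<bar>x - x'\<bar> + \<bar>t - t'\<bar>) + (\<bar>x - x'\<bar> + \<bar>t - t'\<bar>)"
      by (rule add_mono)
    then show ?thesis unfolding e1 by simp
  qed
  finally show ?thesis .
qed

lemma thr_error:
  assumes J: "finite J" and L: "finite \<Lambda>" "card \<Lambda> \<le> n"
  shows "(\<Sum>k\<in>J. (c k - sthr (tval J (2*n) c) (c k))\<^sup>2) \<le> 2 * (\<Sum>k\<in>J - \<Lambda>. (c k)\<^sup>2)"
proof -
  define t where "t = tval J (2*n) c"
  have t0: "t \<ge> 0" unfolding t_def using tval_nonneg[OF J] .
  have split: "(\<Sum>k\<in>J. (c k - sthr t (c k))\<^sup>2) = (\<Sum>k\<in>J - \<Lambda>. (c k - sthr t (c k))\<^sup>2) + (\<Sum>k\<in>J \<inter> \<Lambda>. (c k - sthr t (c k))\<^sup>2)"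
    using sum.Int_Diff[OF J, where g="\<lambda>k. (c k - sthr t (c k))\<^sup>2" and B=\<Lambda>] by linarith
  have s1: "(\<Sum>k\<in>J - \<Lambda>. (c k - sthr t (c k))\<^sup>2) \<le> (\<Sum>k\<in>J - \<Lambda>. (c k)\<^sup>2)"
    using sthr_err[OF t0] by (intro sum_mono) auto
  have "(\<Sum>k\<in>J \<inter> \<Lambda>. (c k - sthr t (c k))\<^sup>2) \<le> (\<Sum>k\<in>J \<inter> \<Lambda>. t\<^sup>2)"
    using sthr_err[OF t0] by (intro sum_mono) auto
  also have "\<dots> = real (card (J \<inter> \<Lambda>)) * t\<^sup>2" by simp
  also have "\<dots> \<le> real n * t\<^sup>2"
  proof -
    have "card (J \<inter> \<Lambda>) \<le> card \<Lambda>" using L by (intro card_mono) auto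
    then show ?thesis using L by (intro mult_right_mono) auto
  qed
  finally have s2: "(\<Sum>k\<in>J \<inter> \<Lambda>. (c k - sthr t (c k))\<^sup>2) \<le> real n * t\<^sup>2" .
  have s3: "real n * t\<^sup>2 \<le> (\<Sum>k\<in>J - \<Lambda>. (c k)\<^sup>2)"
  proof (cases "t = 0")
    case True then show ?thesis by (simp add: sum_nonneg)
  next
    case False
    then have tp: "t > 0" using t0 by simp
    define G where "G = {k\<in>J. \<bar>c k\<bar> \<ge> t}"
    have cG: "card G > 2*n" unfolding G_def t_def using tval_card_ge[OF J] tp t_def by blast
    have "card G - card \<Lambda> \<le> card (G - \<Lambda>)" using L(1) by (rule diff_card_le_card_Diff)
    then have cGL: "card (G - \<Lambda>) \<ge> n" using cG L by linarith
    have "real n * t\<^sup>2 \<le> real (card (G - \<Lambda>)) * t\<^sup>2" using cGL by (intro mult_right_mono) auto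
    also have "\<dots> = (\<Sum>k\<in>G - \<Lambda>. t\<^sup>2)" by simp
    also have "\<dots> \<le> (\<Sum>k\<in>G - \<Lambda>. (c k)\<^sup>2)"
      using t0 by (intro sum_mono) (auto simp: G_def abs_le_square_iff[symmetric])
    also have "\<dots> \<le> (\<Sum>k\<in>J - \<Lambda>. (c k)\<^sup>2)"
      using J by (intro sum_mono2) (auto simp: G_def)
    finally show ?thesis .
  qed
  show ?thesis using split s1 s2 s3 unfolding t_def by linarith
qed



lemma Rnorm_L2: "Rnorm m x = L2_set x {..<m}"
  by (simp add: Rnorm_def L2_set_def)

lemma Rnorm_nonneg: "Rnorm m x \<ge> 0"
  by (simp add: Rnorm_L2)

lemma Rnorm_zero [simp]: "Rnorm m (x - x) = 0"
  by (simp add: Rnorm_def)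

lemma Rnorm_sym: "Rnorm m (x - y) = Rnorm m (y - x)"
  unfolding Rnorm_def by (simp add: power2_commute)

lemma Rnorm_tri: "Rnorm m (x - z) \<le> Rnorm m (x - y) + Rnorm m (y - z)"
proof -
  have "Rnorm m (x - z) = L2_set (\<lambda>i. (x - y) i + (y - z) i) {..<m}"
    by (simp add: Rnorm_L2 fun_diff_def)
  also have "\<dots> \<le> L2_set (x - y) {..<m} + L2_set (y - z) {..<m}"
    by (rule L2_set_triangle_ineq)
  finally show ?thesis by (simp add: Rnorm_L2 fun_diff_def)
qed

lemma Rnorm_comp: "i < m \<Longrightarrow> \<bar>x i\<bar> \<le> Rnorm m x"
proof -
  assume i: "i < m"
  have "\<bar>x i\<bar> \<le> L2_set (\<lambda>i. \<bar>x i\<bar>) {..<m}" using i by (intro member_le_L2_set) auto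
  also have "\<dots> = Rnorm m x" by (simp add: Rnorm_def L2_set_def)
  finally show ?thesis .
qed

definition Lmap :: "nat \<Rightarrow> nat set \<Rightarrow> (nat \<Rightarrow> real) \<Rightarrow> nat \<Rightarrow> real" where
  "Lmap m J a = (\<lambda>j. if j < m then (\<Sum>k\<in>J. a k * real k ^ j) else 0)"

lemma vdm_local:
  assumes L: "finite \<Lambda>" "card \<Lambda> \<le> m" "k0 \<in> \<Lambda>"
  shows "\<exists>M\<ge>0. \<forall>v. \<bar>v k0\<bar> \<le> M * Rnorm m (Lmap m \<Lambda> v)"
proof -
  define p where "p = (\<Prod>i\<in>\<Lambda>-{k0}. [:- real i, 1:])"
  have "degree p \<le> sum (degree \<circ> (\<lambda>i. [:- real i, 1:])) (\<Lambda>-{k0})"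
    unfolding p_def using L by (intro degree_prod_sum_le) auto
  also have "\<dots> = card (\<Lambda> - {k0})" by simp
  also have "\<dots> < m"
  proof -
    have "card \<Lambda> > 0" using L card_gt_0_iff by blast
    moreover have "card (\<Lambda> - {k0}) = card \<Lambda> - 1" using L by (simp add: card_Diff_singleton)
    ultimately show ?thesis using L(2) by simp
  qed
  finally have dp: "degree p < m" .
  have pv: "poly p x = (\<Prod>i\<in>\<Lambda>-{k0}. x - real i)" for x by (simp add: p_def poly_prod)
  have pk0: "poly p (real k0) \<noteq> 0" unfolding pv using L by simp
  have pz: "poly p (real k) = 0" if "k \<in> \<Lambda>" "k \<noteq> k0" for k
    unfolding pv using L that by (intro prod_zero) auto
  have palt: "poly p x = (\<Sum>j<m. coeff p j * x ^ j)" for x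
  proof -
    have "poly p x = (\<Sum>j\<le>degree p. coeff p j * x ^ j)" by (rule poly_altdef)
    also have "\<dots> = (\<Sum>j<m. coeff p j * x ^ j)"
      using dp by (intro sum.mono_neutral_left) (auto simp: coeff_eq_0)
    finally show ?thesis .
  qed
  define M where "M = (\<Sum>j<m. \<bar>coeff p j\<bar>) / \<bar>poly p (real k0)\<bar>"
  have M0: "M \<ge> 0" unfolding M_def by (intro divide_nonneg_nonneg sum_nonneg) auto
  have "\<bar>v k0\<bar> \<le> M * Rnorm m (Lmap m \<Lambda> v)" for v
  proof -
    define Y where "Y = Lmap m \<Lambda> v"
    have key: "(\<Sum>j<m. coeff p j * Y j) = v k0 * poly p (real k0)"
    proof -
      have "(\<Sum>j<m. coeff p j * Y j) = (\<Sum>j<m. \<Sum>k\<in>\<Lambda>. v k * (coeff p j * real k ^ j))"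
        by (intro sum.cong) (auto simp: Y_def Lmap_def sum_distrib_left algebra_simps)
      also have "\<dots> = (\<Sum>k\<in>\<Lambda>. v k * poly p (real k))"
        by (subst sum.swap) (simp add: palt sum_distrib_left)
      also have "\<dots> = v k0 * poly p (real k0) + (\<Sum>k\<in>\<Lambda>-{k0}. v k * poly p (real k))"
        using L by (simp add: sum.remove)
      also have "(\<Sum>k\<in>\<Lambda>-{k0}. v k * poly p (real k)) = 0"
        using pz by (intro sum.neutral) auto
      finally show ?thesis by simp
    qed
    have "\<bar>v k0\<bar> * \<bar>poly p (real k0)\<bar> = \<bar>\<Sum>j<m. coeff p j * Y j\<bar>" by (simp add: key abs_mult)
    also have "\<dots> \<le> (\<Sum>j<m. \<bar>coeff p j\<bar> * \<bar>Y j\<bar>)" by (rule order.trans[OF sum_abs]) (simp add: abs_mult)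
    also have "\<dots> \<le> (\<Sum>j<m. \<bar>coeff p j\<bar> * Rnorm m Y)"
      by (intro sum_mono mult_left_mono Rnorm_comp) auto
    also have "\<dots> = (\<Sum>j<m. \<bar>coeff p j\<bar>) * Rnorm m Y" by (simp add: sum_distrib_right)
    finally have "\<bar>v k0\<bar> * \<bar>poly p (real k0)\<bar> \<le> (\<Sum>j<m. \<bar>coeff p j\<bar>) * Rnorm m Y" .
    then have "\<bar>v k0\<bar> \<le> (\<Sum>j<m. \<bar>coeff p j\<bar>) * Rnorm m Y / \<bar>poly p (real k0)\<bar>"
      using pk0 by (simp add: pos_le_divide_eq)
    then show ?thesis unfolding M_def Y_def by simp
  qed
  then show ?thesis using M0 by blast
qed

lemma vdm_global:
  assumes J: "finite J"
  shows "\<exists>Mc\<ge>0. \<forall>v \<Lambda>. \<Lambda> \<subseteq> J \<longrightarrow> card \<Lambda> \<le> m \<longrightarrow> (\<forall>k. k \<notin> \<Lambda> \<longrightarrow> v k = 0) \<longrightarrow>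
      (\<forall>k. \<bar>v k\<bar> \<le> Mc * Rnorm m (Lmap m J v))"
proof -
  have "\<forall>\<Lambda> k0. \<exists>M. (finite \<Lambda> \<and> card \<Lambda> \<le> m \<and> k0 \<in> \<Lambda>) \<longrightarrow> (M \<ge> 0 \<and> (\<forall>v. \<bar>v k0\<bar> \<le> M * Rnorm m (Lmap m \<Lambda> v)))"
    using vdm_local by blast
  then obtain Mf where Mf: "\<And>\<Lambda> k0. finite \<Lambda> \<Longrightarrow> card \<Lambda> \<le> m \<Longrightarrow> k0 \<in> \<Lambda> \<Longrightarrow>
      Mf \<Lambda> k0 \<ge> 0 \<and> (\<forall>v. \<bar>v k0\<bar> \<le> Mf \<Lambda> k0 * Rnorm m (Lmap m \<Lambda> v))"
    by metis
  define Sets where "Sets = {\<Lambda>. \<Lambda> \<subseteq> J \<and> card \<Lambda> \<le> m}"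
  have finS: "finite Sets" unfolding Sets_def by (rule finite_subset[of _ "Pow J"]) (auto simp: J)
  define Mc where "Mc = (\<Sum>\<Lambda>\<in>Sets. \<Sum>k0\<in>\<Lambda>. Mf \<Lambda> k0)"
  have nn: "(\<Sum>k0\<in>\<Lambda>. Mf \<Lambda> k0) \<ge> 0" if "\<Lambda> \<in> Sets" for \<Lambda>
  proof -
    have fL: "finite \<Lambda>" using that J by (auto simp: Sets_def intro: finite_subset)
    show ?thesis using that Mf[OF fL] by (intro sum_nonneg) (auto simp: Sets_def)
  qed
  have Mc0: "Mc \<ge> 0" unfolding Mc_def by (rule sum_nonneg) (rule nn)
  have main: "\<bar>v k\<bar> \<le> Mc * Rnorm m (Lmap m J v)"
    if L: "\<Lambda> \<subseteq> J" "card \<Lambda> \<le> m" and v: "\<And>k. k \<notin> \<Lambda> \<Longrightarrow> v k = 0" for v \<Lambda> k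
  proof (cases "k \<in> \<Lambda>")
    case False then show ?thesis using v Mc0 Rnorm_nonneg by simp
  next
    case True
    have fL: "finite \<Lambda>" using L J finite_subset by blast
    have eq: "Lmap m J v = Lmap m \<Lambda> v"
      unfolding Lmap_def using L J v by (intro ext) (auto intro!: sum.mono_neutral_right)
    have "\<bar>v k\<bar> \<le> Mf \<Lambda> k * Rnorm m (Lmap m \<Lambda> v)" using Mf[OF fL L(2) True] by blast
    also have "Mf \<Lambda> k \<le> Mc"
    proof -
      have LS: "\<Lambda> \<in> Sets" using L by (simp add: Sets_def)
      have "Mf \<Lambda> k \<le> (\<Sum>k0\<in>\<Lambda>. Mf \<Lambda> k0)"
        using fL True Mf[OF fL L(2)] by (intro member_le_sum) auto
      also have "\<dots> \<le> Mc" unfolding Mc_def using finS LS nn by (intro member_le_sum) auto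
      finally show ?thesis .
    qed
    then have "Mf \<Lambda> k * Rnorm m (Lmap m \<Lambda> v) \<le> Mc * Rnorm m (Lmap m \<Lambda> v)"
      by (intro mult_right_mono Rnorm_nonneg)
    finally show ?thesis using eq by simp
  qed
  show ?thesis using Mc0 main by blast
qed

lemma Lmap_diff: "Lmap m J a - Lmap m J b = Lmap m J (a - b)"
  unfolding Lmap_def by (auto simp: fun_eq_iff sum_subtractf algebra_simps)

lemma mcshane:
  fixes g :: "'z \<Rightarrow> real" and p :: "'z \<Rightarrow> nat \<Rightarrow> real"
  assumes Z: "Z \<noteq> {}" and K: "K \<ge> 0"
    and lip: "\<And>z z'. z \<in> Z \<Longrightarrow> z' \<in> Z \<Longrightarrow> \<bar>g z - g z'\<bar> \<le> K * Rnorm m (p z - p z')"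
  defines "ext \<equiv> \<lambda>y. Inf ((\<lambda>z. g z + K * Rnorm m (y - p z)) ` Z)"
  shows "\<And>z. z \<in> Z \<Longrightarrow> ext (p z) = g z"
    and "\<And>y y'. \<bar>ext y - ext y'\<bar> \<le> K * Rnorm m (y - y')"
proof -
  obtain z0 where z0: "z0 \<in> Z" using Z by blast
  have bdd: "bdd_below ((\<lambda>z. g z + K * Rnorm m (y - p z)) ` Z)" for y
  proof (rule bdd_belowI2)
    fix z assume z: "z \<in> Z"
    have "g z0 - g z \<le> K * Rnorm m (p z0 - p z)" using lip[OF z0 z] by linarith
    also have "\<dots> \<le> K * (Rnorm m (p z0 - y) + Rnorm m (y - p z))"
      using K Rnorm_tri by (intro mult_left_mono) auto
    also have "\<dots> = K * Rnorm m (y - p z0) + K * Rnorm m (y - p z)"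
      by (simp add: Rnorm_sym[of _ "p z0"] algebra_simps)
    finally show "g z0 - K * Rnorm m (y - p z0) \<le> g z + K * Rnorm m (y - p z)" by linarith
  qed
  show "ext (p z) = g z" if z: "z \<in> Z" for z
  proof (rule antisym)
    show "ext (p z) \<le> g z"
      unfolding ext_def using cInf_lower[OF imageI[OF z] bdd[of "p z"]] by simp
    show "g z \<le> ext (p z)"
      unfolding ext_def
    proof (rule cInf_greatest)
      show "(\<lambda>z'. g z' + K * Rnorm m (p z - p z')) ` Z \<noteq> {}" using Z by blast
      fix x assume "x \<in> (\<lambda>z'. g z' + K * Rnorm m (p z - p z')) ` Z"
      then obtain z' where z': "z' \<in> Z" "x = g z' + K * Rnorm m (p z - p z')" by blast
      show "g z \<le> x" using lip[OF z z'(1)] z'(2) by linarith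
    qed
  qed
  have one: "ext y \<le> ext y' + K * Rnorm m (y - y')" for y y'
  proof -
    have "ext y - K * Rnorm m (y - y') \<le> ext y'"
      unfolding ext_def
    proof (rule cInf_greatest)
      show "(\<lambda>z. g z + K * Rnorm m (y' - p z)) ` Z \<noteq> {}" using Z by blast
      fix x assume "x \<in> (\<lambda>z. g z + K * Rnorm m (y' - p z)) ` Z"
      then obtain z where z: "z \<in> Z" "x = g z + K * Rnorm m (y' - p z)" by blast
      have "Inf ((\<lambda>z. g z + K * Rnorm m (y - p z)) ` Z) \<le> g z + K * Rnorm m (y - p z)"
        using cInf_lower[OF imageI[OF z(1)] bdd[of y]] by simp
      also have "\<dots> \<le> g z + K * (Rnorm m (y - y') + Rnorm m (y' - p z))"
        using K Rnorm_tri by (intro add_left_mono mult_left_mono) auto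
      finally show "Inf ((\<lambda>z. g z + K * Rnorm m (y - p z)) ` Z) - K * Rnorm m (y - y') \<le> x"
        using z(2) by (simp add: algebra_simps)
    qed
    then show ?thesis by linarith
  qed
  show "\<bar>ext y - ext y'\<bar> \<le> K * Rnorm m (y - y')" for y y'
  proof -
    have "ext y' \<le> ext y + K * Rnorm m (y - y')" using one[of y' y] Rnorm_sym[of m y' y] by simp
    then show ?thesis using one[of y y'] by linarith
  qed
qed



lemma L2_set_sq: "(L2_set f A)\<^sup>2 = (\<Sum>i\<in>A. (f i)\<^sup>2)"
  unfolding L2_set_def by (simp add: sum_nonneg)


lemma span_rep:
  fixes h :: "nat \<Rightarrow> 'h::real_vector"
  assumes J: "finite J" and w: "w \<in> span (h ` J)"
  shows "\<exists>c. (\<forall>k. k \<notin> J \<longrightarrow> c k = 0) \<and> w = (\<Sum>k\<in>J. c k *\<^sub>R h k)"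
proof -
  define T where "T = {w. \<exists>c. (\<forall>k. k \<notin> J \<longrightarrow> c k = 0) \<and> w = (\<Sum>k\<in>J. c k *\<^sub>R h k)}"
  have "h ` J \<subseteq> T"
  proof
    fix x assume "x \<in> h ` J"
    then obtain j where j: "j \<in> J" "x = h j" by blast
    define c where "c k = (if k = j then 1 else 0 :: real)" for k
    have "(\<Sum>k\<in>J. c k *\<^sub>R h k) = (\<Sum>k\<in>J. if k = j then h k else 0)"
      by (intro sum.cong) (auto simp: c_def)
    also have "\<dots> = h j" using J j by simp
    finally show "x \<in> T" unfolding T_def using j by (intro CollectI exI[of _ c]) (auto simp: c_def)
  qed
  moreover have "subspace T"
    unfolding subspace_def
  proof (intro conjI ballI allI)
    show "0 \<in> T" unfolding T_def by (intro CollectI exI[of _ "\<lambda>_. 0"]) simp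
    fix x y assume "x \<in> T" "y \<in> T"
    then obtain cx cy where cx: "\<forall>k. k \<notin> J \<longrightarrow> cx k = 0" "x = (\<Sum>k\<in>J. cx k *\<^sub>R h k)"
      and cy: "\<forall>k. k \<notin> J \<longrightarrow> cy k = 0" "y = (\<Sum>k\<in>J. cy k *\<^sub>R h k)" unfolding T_def by blast
    show "x + y \<in> T" unfolding T_def
      by (intro CollectI exI[of _ "\<lambda>k. cx k + cy k"]) (simp add: cx cy sum.distrib scaleR_add_left)
  next
    fix r x assume "x \<in> T"
    then obtain cx where cx: "\<forall>k. k \<notin> J \<longrightarrow> cx k = 0" "x = (\<Sum>k\<in>J. cx k *\<^sub>R h k)"
      unfolding T_def by blast
    show "r *\<^sub>R x \<in> T" unfolding T_def
      by (intro CollectI exI[of _ "\<lambda>k. r * cx k"]) (simp add: cx scaleR_sum_right)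
  qed
  ultimately have "span (h ` J) \<subseteq> T" by (rule span_minimal)
  then show ?thesis using w unfolding T_def by blast
qed


lemma sum_in_span:
  fixes h :: "nat \<Rightarrow> 'h::real_vector"
  shows "(\<Sum>k\<in>J. c k *\<^sub>R h k) \<in> span (h ` J)"
  by (intro span_sum span_scale span_base) auto


lemma sum_diff_scaleR:
  fixes h :: "nat \<Rightarrow> 'h::real_vector"
  shows "(\<Sum>k\<in>J. a k *\<^sub>R h k) - (\<Sum>k\<in>J. b k *\<^sub>R h k) = (\<Sum>k\<in>J. (a k - b k) *\<^sub>R h k)"
  by (simp add: sum_subtractf scaleR_diff_left)


lemma qn_props:
  assumes "is_quasinormed_subspace F qn"
  shows "subspace F" "\<And>x. x \<in> F \<Longrightarrow> qn x \<ge> 0" "\<And>x. x \<in> F \<Longrightarrow> qn x = 0 \<longleftrightarrow> x = 0"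
    "\<And>c x. x \<in> F \<Longrightarrow> qn (c *\<^sub>R x) = \<bar>c\<bar> * qn x"
proof -
  have D: "subspace F \<and> (\<forall>x\<in>F. qn x \<ge> 0) \<and> (\<forall>x\<in>F. qn x = 0 \<longleftrightarrow> x = 0) \<and> (\<forall>c. \<forall>x\<in>F. qn (c *\<^sub>R x) = \<bar>c\<bar> * qn x)"
    using assms unfolding is_quasinormed_subspace_def by (elim conjE) (intro conjI; assumption)
  show "subspace F" using D by (rule conjunct1)
  show "\<And>x. x \<in> F \<Longrightarrow> qn x \<ge> 0" using D by (elim conjE) (erule bspec)
  show "\<And>x. x \<in> F \<Longrightarrow> qn x = 0 \<longleftrightarrow> x = 0" using D by (elim conjE) (erule bspec)
  show "\<And>c x. x \<in> F \<Longrightarrow> qn (c *\<^sub>R x) = \<bar>c\<bar> * qn x" using D by (elim conjE) (drule spec, erule bspec)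
qed

lemma qn_zero:
  assumes "is_quasinormed_subspace F qn"
  shows "0 \<in> F" "qn 0 = 0"
proof -
  show "0 \<in> F" using qn_props(1)[OF assms] by (rule subspace_0)
  then have "qn ((0::real) *\<^sub>R 0) = \<bar>0\<bar> * qn 0" by (rule qn_props(4)[OF assms])
  then show "qn 0 = 0" by simp
qed

lemma qn_bound:
  assumes qn: "is_quasinormed_subspace F qn" and Mb: "\<And>x. x \<in> unit_ball_F F qn \<Longrightarrow> norm x \<le> Mb"
    and z: "z \<in> F"
  shows "norm z \<le> Mb * qn z"
proof (cases "qn z = 0")
  case True then have "z = 0" using qn_props(3)[OF qn z] by blast
  then show ?thesis using qn_zero(2)[OF qn] by simp
next
  case False
  define q where "q = qn z"
  have q: "q > 0" using False qn_props(2)[OF qn z] by (simp add: q_def less_le)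
  have inF: "(1/q) *\<^sub>R z \<in> F" using qn_props(1)[OF qn] z by (rule subspace_scale)
  have "qn ((1/q) *\<^sub>R z) = \<bar>1/q\<bar> * qn z" using qn_props(4)[OF qn z] .
  also have "\<dots> = 1" using q by (simp add: q_def)
  finally have "(1/q) *\<^sub>R z \<in> unit_ball_F F qn" using inF by (simp add: unit_ball_F_def)
  then have "norm ((1/q) *\<^sub>R z) \<le> Mb" by (rule Mb)
  then have "norm z / q \<le> Mb" using q by simp
  then show ?thesis using q by (simp add: q_def pos_divide_le_eq mult.commute)
qed





lemma approx_J:
  fixes S :: "'g::real_normed_vector \<Rightarrow> 'h::real_normed_vector" and h :: "nat \<Rightarrow> 'h"
  assumes blS: "bounded_linear S" and ce: "compact (closure B)"
    and sig: "\<And>f. f \<in> B \<Longrightarrow> sigma_n n h (S f) < E'" and eta: "\<eta> > 0"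
  shows "\<exists>J. finite J \<and> (\<forall>f\<in>B. \<exists>b \<Lambda>. \<Lambda> \<subseteq> J \<and> card \<Lambda> \<le> n \<and> (\<forall>k. k \<notin> \<Lambda> \<longrightarrow> b k = 0) \<and>
        norm (S f - (\<Sum>k\<in>J. b k *\<^sub>R h k)) < E' + \<eta>)"
proof -
  interpret S: bounded_linear S by fact
  define oS where "oS = onorm S"
  have oS0: "oS \<ge> 0" unfolding oS_def by (rule onorm_pos_le[OF blS])
  have Sl: "norm (S x - S y) \<le> oS * norm (x - y)" for x y
    unfolding oS_def S.diff[symmetric] by (rule onorm[OF blS])
  have "\<exists>c i. norm (S f - (\<Sum>k<n. c k *\<^sub>R h (i k))) < E'" if f: "f \<in> B" for f
  proof -
    let ?X = "{norm (S f - (\<Sum>k<n. c k *\<^sub>R h (i k))) | c i. True}"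
    have ne: "?X \<noteq> {}" by blast
    have "Inf ?X < E'" using sig[OF f] unfolding sigma_n_def .
    from cInf_lessD[OF ne this] show ?thesis by blast
  qed
  then obtain cf idf where ap: "\<And>f. f \<in> B \<Longrightarrow> norm (S f - (\<Sum>k<n. cf f k *\<^sub>R h (idf f k))) < E'"
    by metis
  define r where "r = \<eta> / (oS + 1)"
  have r0: "r > 0" using eta oS0 by (simp add: r_def)
  have Sr: "oS * r < \<eta>"
  proof -
    have "oS * r = \<eta> * (oS / (oS + 1))" by (simp add: r_def)
    also have "\<dots> < \<eta> * 1" using eta oS0 by (intro mult_strict_left_mono) auto
    finally show ?thesis by simp
  qed
  have cov: "closure B \<subseteq> (\<Union>f\<in>B. ball f r)"
  proof
    fix x assume "x \<in> closure B"
    then obtain f where "f \<in> B" "dist f x < r" using r0 unfolding closure_approachable by blast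
    then show "x \<in> (\<Union>f\<in>B. ball f r)" by auto
  qed
  obtain Fin where Fin: "Fin \<subseteq> B" "finite Fin" "closure B \<subseteq> (\<Union>f\<in>Fin. ball f r)"
    using compactE_image[OF ce _ cov] by blast
  define J where "J = (\<Union>f\<in>Fin. idf f ` {..<n})"
  have finJ: "finite J" unfolding J_def using Fin(2) by blast
  have near: "\<exists>b \<Lambda>. \<Lambda> \<subseteq> J \<and> card \<Lambda> \<le> n \<and> (\<forall>k. k \<notin> \<Lambda> \<longrightarrow> b k = 0) \<and>
        norm (S f - (\<Sum>k\<in>J. b k *\<^sub>R h k)) < E' + \<eta>" if f: "f \<in> B" for f
  proof -
    have "f \<in> closure B" using f closure_subset by blast
    then obtain f' where f': "f' \<in> Fin" "f \<in> ball f' r" using Fin(3) by blast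
    have f'B: "f' \<in> B" using f' Fin(1) by blast
    have "norm (S f - S f') \<le> oS * norm (f - f')" by (rule Sl)
    also have "\<dots> \<le> oS * r" using f'(2) oS0 by (intro mult_left_mono) (auto simp: dist_norm norm_minus_commute)
    finally have d1: "norm (S f - S f') < \<eta>" using Sr by linarith
    define \<Lambda> where "\<Lambda> = idf f' ` {..<n}"
    define b where "b j = (if j \<in> \<Lambda> then (\<Sum>k\<in>{k\<in>{..<n}. idf f' k = j}. cf f' k) else 0)" for j
    have LJ: "\<Lambda> \<subseteq> J" unfolding \<Lambda>_def J_def using f'(1) by blast
    have cL: "card \<Lambda> \<le> n" unfolding \<Lambda>_def using card_image_le[of "{..<n}" "idf f'"] by simp
    have bz: "\<forall>k. k \<notin> \<Lambda> \<longrightarrow> b k = 0" by (simp add: b_def)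
    have "(\<Sum>k<n. cf f' k *\<^sub>R h (idf f' k)) = (\<Sum>j\<in>\<Lambda>. (\<Sum>k\<in>{k\<in>{..<n}. idf f' k = j}. cf f' k *\<^sub>R h (idf f' k)))"
      unfolding \<Lambda>_def by (rule sum.image_gen) simp
    also have "\<dots> = (\<Sum>j\<in>\<Lambda>. b j *\<^sub>R h j)"
    proof (rule sum.cong[OF refl])
      fix j assume j: "j \<in> \<Lambda>"
      have "(\<Sum>k\<in>{k\<in>{..<n}. idf f' k = j}. cf f' k *\<^sub>R h (idf f' k)) = (\<Sum>k\<in>{k\<in>{..<n}. idf f' k = j}. cf f' k *\<^sub>R h j)"
        by (rule sum.cong) auto
      also have "\<dots> = (\<Sum>k\<in>{k\<in>{..<n}. idf f' k = j}. cf f' k) *\<^sub>R h j" by (rule scaleR_sum_left[symmetric])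
      finally show "(\<Sum>k\<in>{k\<in>{..<n}. idf f' k = j}. cf f' k *\<^sub>R h (idf f' k)) = b j *\<^sub>R h j"
        using j by (simp add: b_def)
    qed
    also have "\<dots> = (\<Sum>j\<in>J. b j *\<^sub>R h j)"
      using finJ LJ bz by (intro sum.mono_neutral_left) auto
    finally have weq: "(\<Sum>k<n. cf f' k *\<^sub>R h (idf f' k)) = (\<Sum>j\<in>J. b j *\<^sub>R h j)" .
    have "norm (S f - (\<Sum>j\<in>J. b j *\<^sub>R h j)) \<le> norm (S f - S f') + norm (S f' - (\<Sum>j\<in>J. b j *\<^sub>R h j))"
      by (rule norm_diff_triangle_ineq[THEN order_trans[rotated]]) (simp add: norm_triangle_sub)
    also have "\<dots> < \<eta> + E'" using d1 ap[OF f'B] weq by simp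
    finally show ?thesis using LJ cL bz by (intro exI[of _ b] exI[of _ \<Lambda>]) simp
  qed
  show ?thesis using finJ near by blast
qed



lemma err_bound:
  fixes h :: "nat \<Rightarrow> 'h::real_inner" and Q :: "'h \<Rightarrow> 'h"
  assumes hR: "is_riesz_basis h" and ratio: "riesz_B h \<le> C * riesz_A h" and C: "C \<ge> 1"
    and J: "finite J"
    and Qu: "Q u \<in> span (h ` J)" "\<forall>w\<in>span (h ` J). inner (u - Q u) w = 0"
    and c: "Q u = (\<Sum>k\<in>J. c k *\<^sub>R h k)"
    and b: "\<Lambda> \<subseteq> J" "card \<Lambda> \<le> n" "\<forall>k. k \<notin> \<Lambda> \<longrightarrow> b k = 0" "norm (u - (\<Sum>k\<in>J. b k *\<^sub>R h k)) < R"
  shows "norm (u - (\<Sum>k\<in>J. sthr (tval J (2*n) c) (c k) *\<^sub>R h k)) \<le> sqrt 2 * C * R"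
proof -
  define A where "A = riesz_A h"
  define Bc where "Bc = riesz_B h"
  have A0: "A > 0" using hR by (simp add: A_def is_riesz_basis_def)
  have AB: "A \<le> Bc" unfolding A_def Bc_def by (rule riesz_A_le_B[OF hR])
  have BcC: "Bc \<le> C * A" using ratio by (simp add: A_def Bc_def)
  define t where "t = tval J (2*n) c"
  define a where "a k = sthr t (c k)" for k
  define v where "v = (\<Sum>k\<in>J. a k *\<^sub>R h k)"
  define wb where "wb = (\<Sum>k\<in>J. b k *\<^sub>R h k)"
  have vs: "v \<in> span (h ` J)" unfolding v_def by (rule sum_in_span)
  have ws: "wb \<in> span (h ` J)" unfolding wb_def by (rule sum_in_span)
  have P1: "(norm (u - v))\<^sup>2 = (norm (u - Q u))\<^sup>2 + (norm (Q u - v))\<^sup>2"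
    by (rule proj_pyth[where Q=Q and u=u, OF Qu vs])
  have P2: "(norm (u - wb))\<^sup>2 = (norm (u - Q u))\<^sup>2 + (norm (Q u - wb))\<^sup>2"
    by (rule proj_pyth[where Q=Q and u=u, OF Qu ws])
  define X where "X = norm (Q u - v)"
  define Y where "Y = norm (Q u - wb)"
  define Lc where "Lc = L2_set (\<lambda>k. c k - a k) J"
  define Lb where "Lb = L2_set (\<lambda>k. c k - b k) J"
  have X: "X \<le> Bc * Lc"
  proof -
    have "Q u - v = (\<Sum>k\<in>J. (c k - a k) *\<^sub>R h k)" unfolding c v_def by (rule sum_diff_scaleR)
    then show ?thesis unfolding X_def Lc_def Bc_def using riesz_upper[OF hR J] by simp
  qed
  have Y: "A * Lb \<le> Y"
  proof -
    have "Q u - wb = (\<Sum>k\<in>J. (c k - b k) *\<^sub>R h k)" unfolding c wb_def by (rule sum_diff_scaleR)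
    then show ?thesis unfolding Y_def Lb_def A_def using riesz_lower[OF hR J] by simp
  qed
  have fL: "finite \<Lambda>" using b(1) J finite_subset by blast
  have Lc2: "Lc\<^sup>2 \<le> 2 * Lb\<^sup>2"
  proof -
    have "Lc\<^sup>2 = (\<Sum>k\<in>J. (c k - sthr (tval J (2*n) c) (c k))\<^sup>2)"
      unfolding Lc_def L2_set_sq a_def t_def ..
    also have "\<dots> \<le> 2 * (\<Sum>k\<in>J - \<Lambda>. (c k)\<^sup>2)" by (rule thr_error[OF J fL b(2)])
    also have "(\<Sum>k\<in>J - \<Lambda>. (c k)\<^sup>2) = (\<Sum>k\<in>J - \<Lambda>. (c k - b k)\<^sup>2)"
      using b(3) by (intro sum.cong) auto
    also have "\<dots> \<le> (\<Sum>k\<in>J. (c k - b k)\<^sup>2)" using J by (intro sum_mono2) auto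
    also have "\<dots> = Lb\<^sup>2" unfolding Lb_def L2_set_sq ..
    finally show ?thesis by simp
  qed
  have Lc0: "Lc \<ge> 0" and Lb0: "Lb \<ge> 0" and X0: "X \<ge> 0" unfolding Lc_def Lb_def X_def by simp_all
  have Bc0: "Bc \<ge> 0" using A0 AB by simp
  have "X\<^sup>2 \<le> (Bc * Lc)\<^sup>2" using X X0 by (intro power_mono) auto
  also have "\<dots> = Bc\<^sup>2 * Lc\<^sup>2" by (simp add: power_mult_distrib)
  also have "\<dots> \<le> Bc\<^sup>2 * (2 * Lb\<^sup>2)" using Lc2 by (intro mult_left_mono) auto
  also have "\<dots> \<le> (C * A)\<^sup>2 * (2 * Lb\<^sup>2)" using BcC Bc0 by (intro mult_right_mono power_mono) auto
  also have "\<dots> = 2 * C\<^sup>2 * (A * Lb)\<^sup>2" by (simp add: power_mult_distrib)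
  also have "\<dots> \<le> 2 * C\<^sup>2 * Y\<^sup>2" using Y A0 Lb0 by (intro mult_left_mono power_mono) auto
  finally have XY: "X\<^sup>2 \<le> 2 * C\<^sup>2 * Y\<^sup>2" .
  have C2: "2 * C\<^sup>2 \<ge> 1"
  proof -
    have "1 \<le> C\<^sup>2" using C by (simp add: one_le_power)
    then show ?thesis by simp
  qed
  have "(norm (u - v))\<^sup>2 \<le> 2 * C\<^sup>2 * (norm (u - wb))\<^sup>2"
  proof -
    have "(norm (u - v))\<^sup>2 = (norm (u - Q u))\<^sup>2 + X\<^sup>2" using P1 by (simp add: X_def)
    also have "\<dots> \<le> 2 * C\<^sup>2 * (norm (u - Q u))\<^sup>2 + 2 * C\<^sup>2 * Y\<^sup>2"
    proof (rule add_mono[OF _ XY])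
      have "1 * (norm (u - Q u))\<^sup>2 \<le> 2 * C\<^sup>2 * (norm (u - Q u))\<^sup>2"
        using C2 by (rule mult_right_mono) simp
      then show "(norm (u - Q u))\<^sup>2 \<le> 2 * C\<^sup>2 * (norm (u - Q u))\<^sup>2" by simp
    qed
    also have "\<dots> = 2 * C\<^sup>2 * (norm (u - wb))\<^sup>2" using P2 by (simp add: Y_def algebra_simps)
    finally show ?thesis .
  qed
  also have "\<dots> \<le> 2 * C\<^sup>2 * R\<^sup>2"
    using b(4) C by (intro mult_left_mono power_mono) (auto simp: wb_def)
  also have "\<dots> = (sqrt 2 * C * R)\<^sup>2" by (simp add: power_mult_distrib)
  finally have sq: "(norm (u - v))\<^sup>2 \<le> (sqrt 2 * C * R)\<^sup>2" .
  have R0: "R \<ge> 0" using b(4) norm_ge_zero[of "u - wb"] unfolding wb_def by linarith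
  have "norm (u - v) \<le> sqrt 2 * C * R"
    using sq by (rule power2_le_imp_le) (use R0 C in simp)
  then show ?thesis by (simp add: v_def a_def t_def)
qed


lemma abs_le_L2_set: "finite A \<Longrightarrow> i \<in> A \<Longrightarrow> \<bar>f i\<bar> \<le> L2_set f A"
proof -
  assume "finite A" "i \<in> A"
  then have "\<bar>f i\<bar> \<le> L2_set (\<lambda>i. \<bar>f i\<bar>) A" by (intro member_le_L2_set) auto
  also have "\<dots> = L2_set f A" by (simp add: L2_set_def)
  finally show ?thesis .
qed

lemma core:
  fixes S :: "'g::real_normed_vector \<Rightarrow> 'h::real_inner" and h :: "nat \<Rightarrow> 'h"
  assumes blS: "bounded_linear S" and qn: "is_quasinormed_subspace F qn" and ce: "compact_embedding F qn"
    and C: "C \<ge> 1" and hC: "h \<in> riesz_bases_C C"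
    and sig: "\<And>f. f \<in> unit_ball_F F qn \<Longrightarrow> sigma_n n h (S f) < E'" and eta: "\<eta> > 0"
  shows "e_cont (4*n+1) S F qn \<le> ereal (sqrt 2 * C * (E' + \<eta>))"
proof -
  define B where "B = unit_ball_F F qn"
  define m where "m = 4*n+1"
  have hR: "is_riesz_basis h" and ratio0: "riesz_B h / riesz_A h \<le> C"
    using hC by (simp_all add: riesz_bases_C_def)
  define A where "A = riesz_A h"
  have A0: "A > 0" using hR by (simp add: A_def is_riesz_basis_def)
  have ratio: "riesz_B h \<le> C * riesz_A h" using ratio0 A0 by (simp add: A_def pos_divide_le_eq)
  have ceB: "compact (closure B)" using ce by (simp add: compact_embedding_def B_def)
  have sigB: "\<And>f. f \<in> B \<Longrightarrow> sigma_n n h (S f) < E'" using sig by (simp add: B_def)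
  obtain J where J: "finite J" and near: "\<forall>f\<in>B. \<exists>b \<Lambda>. \<Lambda> \<subseteq> J \<and> card \<Lambda> \<le> n \<and> (\<forall>k. k \<notin> \<Lambda> \<longrightarrow> b k = 0) \<and>
        norm (S f - (\<Sum>k\<in>J. b k *\<^sub>R h k)) < E' + \<eta>"
    using approx_J[OF blS ceB sigB eta] by blast
  obtain Q where Q: "linear Q" "\<forall>u. Q u \<in> span (h ` J)" "\<forall>u. \<forall>w\<in>span (h ` J). inner (u - Q u) w = 0"
    using proj_exists[of "h ` J"] J by blast
  define co where "co w = (SOME c. (\<forall>k. k \<notin> J \<longrightarrow> c k = 0) \<and> w = (\<Sum>k\<in>J. c k *\<^sub>R h k))" for w
  have co: "(\<forall>k. k \<notin> J \<longrightarrow> co w k = 0) \<and> w = (\<Sum>k\<in>J. co w k *\<^sub>R h k)" if "w \<in> span (h ` J)" for w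
    unfolding co_def by (rule someI_ex[OF span_rep[OF J that]])
  define cv where "cv f = co (Q (S f))" for f
  define tv where "tv f = tval J (2*n) (cv f)" for f
  define av where "av f = (\<lambda>k. if k \<in> J then sthr (tv f) (cv f k) else 0)" for f
  define N where "N f = Lmap m J (av f)" for f
  have cq: "Q (S f) = (\<Sum>k\<in>J. cv f k *\<^sub>R h k)" for f
    using co[of "Q (S f)"] Q(2) by (simp add: cv_def)
  have errf: "norm (S f - (\<Sum>k\<in>J. av f k *\<^sub>R h k)) \<le> sqrt 2 * C * (E' + \<eta>)" if f: "f \<in> B" for f
  proof -
    obtain b \<Lambda> where bL: "\<Lambda> \<subseteq> J" "card \<Lambda> \<le> n" "\<forall>k. k \<notin> \<Lambda> \<longrightarrow> b k = 0"
        "norm (S f - (\<Sum>k\<in>J. b k *\<^sub>R h k)) < E' + \<eta>"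
      using near f by blast
    have "norm (S f - (\<Sum>k\<in>J. sthr (tval J (2*n) (cv f)) (cv f k) *\<^sub>R h k)) \<le> sqrt 2 * C * (E' + \<eta>)"
      by (rule err_bound[where Q=Q and u="S f", OF hR ratio C J spec[OF Q(2)] spec[OF Q(3)] cq[of f] bL])
    moreover have "(\<Sum>k\<in>J. av f k *\<^sub>R h k) = (\<Sum>k\<in>J. sthr (tval J (2*n) (cv f)) (cv f k) *\<^sub>R h k)"
      by (intro sum.cong) (auto simp: av_def tv_def)
    ultimately show ?thesis by simp
  qed
  have suppJ: "{k. av f k \<noteq> 0} \<subseteq> {k\<in>J. \<bar>cv f k\<bar> > tv f}" for f
  proof
    fix k assume "k \<in> {k. av f k \<noteq> 0}"
    then have k: "k \<in> J" "sthr (tv f) (cv f k) \<noteq> 0" by (auto simp: av_def split: if_splits)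
    have "tv f \<ge> 0" unfolding tv_def by (rule tval_nonneg[OF J])
    then show "k \<in> {k\<in>J. \<bar>cv f k\<bar> > tv f}" using k sthr_nz by blast
  qed
  have supp: "card {k. av f k \<noteq> 0} \<le> 2*n" for f
  proof -
    have "card {k. av f k \<noteq> 0} \<le> card {k\<in>J. \<bar>cv f k\<bar> > tv f}"
      using suppJ J by (intro card_mono) auto
    also have "\<dots> \<le> 2*n" unfolding tv_def by (rule tval_card_gt[OF J])
    finally show ?thesis .
  qed
  obtain Mc where Mc0: "Mc \<ge> 0" and Mc: "\<forall>v \<Lambda>. \<Lambda> \<subseteq> J \<longrightarrow> card \<Lambda> \<le> m \<longrightarrow> (\<forall>k. k \<notin> \<Lambda> \<longrightarrow> v k = 0) \<longrightarrow>
      (\<forall>k. \<bar>v k\<bar> \<le> Mc * Rnorm m (Lmap m J v))"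
    using vdm_global[OF J, of m] by blast
  have lipZ: "\<bar>av f k - av f' k\<bar> \<le> Mc * Rnorm m (N f - N f')" for f f' k
  proof -
    define \<Lambda> where "\<Lambda> = {k. av f k \<noteq> 0} \<union> {k. av f' k \<noteq> 0}"
    have LJ: "\<Lambda> \<subseteq> J" unfolding \<Lambda>_def using suppJ by blast
    have "card \<Lambda> \<le> card {k. av f k \<noteq> 0} + card {k. av f' k \<noteq> 0}" unfolding \<Lambda>_def by (rule card_Un_le)
    also have "\<dots> \<le> 2*n + 2*n" using supp by (intro add_mono)
    also have "\<dots> \<le> m" by (simp add: m_def)
    finally have cL: "card \<Lambda> \<le> m" .
    have vz: "\<forall>k. k \<notin> \<Lambda> \<longrightarrow> (av f - av f') k = 0" by (simp add: \<Lambda>_def)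
    have "\<bar>(av f - av f') k\<bar> \<le> Mc * Rnorm m (Lmap m J (av f - av f'))"
      using Mc LJ cL vz by blast
    then show ?thesis by (simp add: N_def Lmap_diff)
  qed
  have B0: "0 \<in> B" using qn_zero[OF qn] by (simp add: B_def unit_ball_F_def)
  then have Bne: "B \<noteq> {}" by blast
  define ext where "ext k y = Inf ((\<lambda>f. av f k + Mc * Rnorm m (y - N f)) ` B)" for k y
  have ext1: "ext k (N f) = av f k" if f: "f \<in> B" for k f
  proof -
    have "Inf ((\<lambda>z. (\<lambda>f. av f k) z + Mc * Rnorm m (N f - N z)) ` B) = (\<lambda>f. av f k) f"
      by (rule mcshane(1)[where Z=B and K=Mc and g="\<lambda>f. av f k" and m=m and p=N, OF Bne Mc0 lipZ f])
    then show ?thesis by (simp add: ext_def)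
  qed
  have ext2: "\<bar>ext k y - ext k y'\<bar> \<le> Mc * Rnorm m (y - y')" for k y y'
  proof -
    have "\<bar>Inf ((\<lambda>z. (\<lambda>f. av f k) z + Mc * Rnorm m (y - N z)) ` B) - Inf ((\<lambda>z. (\<lambda>f. av f k) z + Mc * Rnorm m (y' - N z)) ` B)\<bar>
        \<le> Mc * Rnorm m (y - y')"
      by (rule mcshane(2)[where Z=B and K=Mc and g="\<lambda>f. av f k" and m=m and p=N, OF Bne Mc0 lipZ])
    then show ?thesis by (simp add: ext_def)
  qed
  define \<phi> where "\<phi> y = (\<Sum>k\<in>J. ext k y *\<^sub>R h k)" for y
  have \<phi>N: "\<phi> (N f) = (\<Sum>k\<in>J. av f k *\<^sub>R h k)" if f: "f \<in> B" for f
    unfolding \<phi>_def by (intro sum.cong refl) (simp add: ext1[OF f])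
  define Hs where "Hs = (\<Sum>k\<in>J. norm (h k))"
  have Hs0: "Hs \<ge> 0" unfolding Hs_def by (intro sum_nonneg) simp
  have \<phi>lip: "norm (\<phi> y - \<phi> y') \<le> Mc * Hs * Rnorm m (y - y')" for y y'
  proof -
    have "\<phi> y - \<phi> y' = (\<Sum>k\<in>J. (ext k y - ext k y') *\<^sub>R h k)" unfolding \<phi>_def by (rule sum_diff_scaleR)
    then have "norm (\<phi> y - \<phi> y') \<le> (\<Sum>k\<in>J. norm ((ext k y - ext k y') *\<^sub>R h k))"
      using norm_sum[of "\<lambda>k. (ext k y - ext k y') *\<^sub>R h k" J] by (simp only:)
    also have "\<dots> = (\<Sum>k\<in>J. \<bar>ext k y - ext k y'\<bar> * norm (h k))" by simp
    also have "\<dots> \<le> (\<Sum>k\<in>J. Mc * Rnorm m (y - y') * norm (h k))"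
      by (intro sum_mono mult_right_mono ext2) simp
    also have "\<dots> = Mc * Hs * Rnorm m (y - y')" by (simp add: Hs_def sum_distrib_left algebra_simps)
    finally show ?thesis .
  qed
  have cont\<phi>: "cont_Rm_H m \<phi>"
    unfolding cont_Rm_H_def
  proof (intro ballI allI impI)
    fix x :: "nat \<Rightarrow> real" and e :: real assume e: "e > 0"
    define \<delta> where "\<delta> = e / (Mc * Hs + 1)"
    have MH: "Mc * Hs \<ge> 0" using Mc0 Hs0 by simp
    have d0: "\<delta> > 0" using e MH by (simp add: \<delta>_def)
    have "\<forall>y\<in>Rvecs m. Rnorm m (y - x) < \<delta> \<longrightarrow> norm (\<phi> y - \<phi> x) < e"
    proof (intro ballI impI)
      fix y assume y: "Rnorm m (y - x) < \<delta>"
      have "norm (\<phi> y - \<phi> x) \<le> Mc * Hs * Rnorm m (y - x)" by (rule \<phi>lip)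
      also have "\<dots> \<le> Mc * Hs * \<delta>" using y MH by (intro mult_left_mono) auto
      also have "\<dots> = e * (Mc * Hs / (Mc * Hs + 1))" by (simp add: \<delta>_def)
      also have "\<dots> < e * 1" using e MH by (intro mult_strict_left_mono) auto
      finally show "norm (\<phi> y - \<phi> x) < e" by simp
    qed
    then show "\<exists>\<delta>>0. \<forall>y\<in>Rvecs m. Rnorm m (y - x) < \<delta> \<longrightarrow> norm (\<phi> y - \<phi> x) < e" using d0 by blast
  qed
  obtain Mb where Mb: "\<And>x. x \<in> closure B \<Longrightarrow> norm x \<le> Mb"
    using compact_imp_bounded[OF ceB] unfolding bounded_iff by blast
  have Mb': "\<And>x. x \<in> unit_ball_F F qn \<Longrightarrow> norm x \<le> Mb"
    using Mb closure_subset unfolding B_def by blast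
  have Mb0: "Mb \<ge> 0" using Mb'[of 0] B0 by (simp add: B_def)
  define oS where "oS = onorm S"
  have oS0: "oS \<ge> 0" unfolding oS_def by (rule onorm_pos_le[OF blS])
  have Sl: "norm (S x - S y) \<le> oS * norm (x - y)" for x y
    unfolding oS_def linear_diff[OF bounded_linear.linear[OF blS], symmetric] by (rule onorm[OF blS])
  have Qn: "norm (Q w) \<le> norm w" for w
  proof -
    have "(norm (w - 0))\<^sup>2 = (norm (w - Q w))\<^sup>2 + (norm (Q w - 0))\<^sup>2"
      using Q(2,3) by (intro proj_pyth[where Q=Q and u=w and V="h ` J"]) (auto simp: span_zero)
    then have "(norm (Q w))\<^sup>2 \<le> (norm w)\<^sup>2" by simp
    then show ?thesis by (rule power2_le_imp_le) simp
  qed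
  have Qlip: "norm (Q u - Q u') \<le> norm (u - u')" for u u'
    using Qn[of "u - u'"] by (simp add: linear_diff[OF Q(1)])
  have colip: "A * L2_set (\<lambda>k. cv f k - cv f' k) J \<le> norm (S f - S f')" for f f'
  proof -
    have "Q (S f) - Q (S f') = (\<Sum>k\<in>J. (cv f k - cv f' k) *\<^sub>R h k)" unfolding cq by (rule sum_diff_scaleR)
    then have "A * L2_set (\<lambda>k. cv f k - cv f' k) J \<le> norm (Q (S f) - Q (S f'))"
      unfolding A_def using riesz_lower[OF hR J] by simp
    also have "\<dots> \<le> norm (S f - S f')" by (rule Qlip)
    finally show ?thesis .
  qed
  define V where "V = (\<Sum>j<m. \<Sum>k\<in>J. real k ^ j)"
  have V0: "V \<ge> 0" unfolding V_def by (intro sum_nonneg) simp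
  have Nlip: "Rnorm m (N f - N f') \<le> 4 * V * L2_set (\<lambda>k. cv f k - cv f' k) J" for f f'
  proof -
    define D where "D = L2_set (\<lambda>k. cv f k - cv f' k) J"
    have D0: "D \<ge> 0" by (simp add: D_def)
    have dc: "\<bar>cv f k - cv f' k\<bar> \<le> D" if "k \<in> J" for k
      unfolding D_def using abs_le_L2_set[OF J that, of "\<lambda>k. cv f k - cv f' k"] by simp
    have dt: "\<bar>tv f - tv f'\<bar> \<le> D" unfolding tv_def by (rule tval_lip_abs[OF J D0 dc])
    have da: "\<bar>av f k - av f' k\<bar> \<le> 4 * D" for k
    proof (cases "k \<in> J")
      case True
      have "\<bar>av f k - av f' k\<bar> = \<bar>sthr (tv f) (cv f k) - sthr (tv f') (cv f' k)\<bar>" using True by (simp add: av_def)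
      also have "\<dots> \<le> 2 * (\<bar>cv f k - cv f' k\<bar> + \<bar>tv f - tv f'\<bar>)" by (rule sthr_lip)
      also have "\<dots> \<le> 2 * (D + D)" using dc[OF True] dt by simp
      finally show ?thesis by simp
    next
      case False then show ?thesis using D0 by (simp add: av_def)
    qed
    have "Rnorm m (N f - N f') = L2_set (Lmap m J (av f - av f')) {..<m}"
      by (simp add: N_def Lmap_diff Rnorm_L2)
    also have "\<dots> \<le> (\<Sum>j<m. \<bar>Lmap m J (av f - av f') j\<bar>)" by (rule L2_set_le_sum_abs)
    also have "\<dots> \<le> (\<Sum>j<m. \<Sum>k\<in>J. 4 * D * real k ^ j)"
    proof (rule sum_mono)
      fix j assume j: "j \<in> {..<m}"
      have "\<bar>Lmap m J (av f - av f') j\<bar> = \<bar>\<Sum>k\<in>J. (av f k - av f' k) * real k ^ j\<bar>"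
        using j by (simp add: Lmap_def)
      also have "\<dots> \<le> (\<Sum>k\<in>J. \<bar>(av f k - av f' k) * real k ^ j\<bar>)" by (rule sum_abs)
      also have "\<dots> \<le> (\<Sum>k\<in>J. 4 * D * real k ^ j)"
        by (intro sum_mono) (simp add: abs_mult mult_right_mono da)
      finally show "\<bar>Lmap m J (av f - av f') j\<bar> \<le> (\<Sum>k\<in>J. 4 * D * real k ^ j)" .
    qed
    also have "\<dots> = 4 * V * D" by (simp add: V_def sum_distrib_left algebra_simps)
    finally show ?thesis by (simp add: D_def)
  qed
  define KN where "KN = 4 * V * oS * Mb / A"
  have KN0: "KN \<ge> 0" unfolding KN_def using V0 oS0 Mb0 A0 by simp
  have NF: "Rnorm m (N y - N x) \<le> KN * qn (y - x)" if x: "x \<in> F" and y: "y \<in> F" for x y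
  proof -
    have yx: "y - x \<in> F" using qn_props(1)[OF qn] y x by (rule subspace_diff)
    have "Rnorm m (N y - N x) \<le> 4 * V * L2_set (\<lambda>k. cv y k - cv x k) J" by (rule Nlip)
    also have "\<dots> \<le> 4 * V * (norm (S y - S x) / A)"
      using colip[of y x] A0 V0 by (intro mult_left_mono) (auto simp: pos_le_divide_eq mult.commute)
    also have "\<dots> \<le> 4 * V * (oS * norm (y - x) / A)"
      using Sl[of y x] A0 V0 by (intro mult_left_mono divide_right_mono) auto
    also have "\<dots> \<le> 4 * V * (oS * (Mb * qn (y - x)) / A)"
      using qn_bound[OF qn Mb' yx] A0 V0 oS0 by (intro mult_left_mono divide_right_mono) auto
    also have "\<dots> = KN * qn (y - x)" by (simp add: KN_def)
    finally show ?thesis .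
  qed
  have contN: "cont_F_Rm F qn m N"
    unfolding cont_F_Rm_def
  proof (intro conjI ballI allI impI)
    fix x assume "x \<in> F"
    show "N x \<in> Rvecs m" by (simp add: N_def Lmap_def Rvecs_def)
  next
    fix x and e :: real assume x: "x \<in> F" and e: "e > 0"
    define \<delta> where "\<delta> = e / (KN + 1)"
    have d0: "\<delta> > 0" using e KN0 by (simp add: \<delta>_def)
    have "\<forall>y\<in>F. qn (y - x) < \<delta> \<longrightarrow> Rnorm m (N y - N x) < e"
    proof (intro ballI impI)
      fix y assume y: "y \<in> F" and q: "qn (y - x) < \<delta>"
      have yx: "y - x \<in> F" using qn_props(1)[OF qn] y x by (rule subspace_diff)
      have "Rnorm m (N y - N x) \<le> KN * qn (y - x)" by (rule NF[OF x y])
      also have "\<dots> \<le> KN * \<delta>" using q KN0 by (intro mult_left_mono) auto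
      also have "\<dots> = e * (KN / (KN + 1))" by (simp add: \<delta>_def)
      also have "\<dots> < e * 1" using e KN0 by (intro mult_strict_left_mono) auto
      finally show "Rnorm m (N y - N x) < e" by simp
    qed
    then show "\<exists>\<delta>>0. \<forall>y\<in>F. qn (y - x) < \<delta> \<longrightarrow> Rnorm m (N y - N x) < e" using d0 by blast
  qed
  have pair: "(N, \<phi>) \<in> {(N, \<phi>). cont_F_Rm F qn m N \<and> cont_Rm_H m \<phi>}" using contN cont\<phi> by simp
  have "err S (\<phi> \<circ> N) F qn \<le> ereal (sqrt 2 * C * (E' + \<eta>))"
    unfolding err_def B_def[symmetric]
  proof (rule SUP_least)
    fix f assume f: "f \<in> B"
    show "ereal (norm (S f - (\<phi> \<circ> N) f)) \<le> ereal (sqrt 2 * C * (E' + \<eta>))"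
      using errf[OF f] \<phi>N[OF f] by simp
  qed
  then have "(case (N, \<phi>) of (N, \<phi>) \<Rightarrow> err S (\<phi> \<circ> N) F qn) \<le> ereal (sqrt 2 * C * (E' + \<eta>))"
    by simp
  then show ?thesis unfolding e_cont_def m_def[symmetric]
    by (rule INF_lower2[OF pair])
qed


theorem theorem1:
  fixes S :: "'g::{real_inner,complete_space} \<Rightarrow> 'h::{real_inner,complete_space}"
    and F :: "'g set" and qn :: "'g \<Rightarrow> real"
    and C :: real and n :: nat
  assumes "bounded_linear S" and "bij S"
    and "is_quasinormed_subspace F qn"
    and "compact_embedding F qn"
    and "C \<ge> 1"
  shows "e_cont (4 * n + 1) S F qn
     \<le> ereal (2 * C * (onorm S)\<^sup>2 * (onorm (inv S))\<^sup>2) * e_non n C S F qn"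
proof -
  note blS = assms(1) and bij = assms(2) and qn = assms(3) and ce = assms(4) and C = assms(5)
  define c0 where "c0 = 2 * C * (onorm S)\<^sup>2 * (onorm (inv S))\<^sup>2"
  define B where "B = unit_ball_F F qn"
  have B0: "0 \<in> B" using qn_zero[OF qn] by (simp add: B_def unit_ball_F_def)
  have sig0: "sigma_n n h u \<ge> 0" for h :: "nat \<Rightarrow> 'h" and u
    unfolding sigma_n_def by (rule cInf_greatest) auto
  have enn: "e_non n C S F qn \<ge> 0"
    unfolding e_non_def
  proof (rule INF_greatest)
    fix h :: "nat \<Rightarrow> 'h" assume "h \<in> riesz_bases_C C"
    have "ereal 0 \<le> ereal (sigma_n n h (S 0))" using sig0 by simp
    also have "\<dots> \<le> (SUP f\<in>unit_ball_F F qn. ereal (sigma_n n h (S f)))"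
      using B0 unfolding B_def by (rule SUP_upper)
    finally show "0 \<le> (SUP f\<in>unit_ball_F F qn. ereal (sigma_n n h (S f)))" by (simp only: zero_ereal_def)
  qed
  have c00: "c0 \<ge> 0" unfolding c0_def using C by simp
  show ?thesis
  proof (cases "\<forall>y::'h. y = 0")
    case True
    define N0 where "N0 = (\<lambda>_::'g. (\<lambda>_::nat. 0::real))"
    define P0 where "P0 = (\<lambda>_::nat \<Rightarrow> real. 0::'h)"
    have pair: "(N0, P0) \<in> {(N, \<phi>). cont_F_Rm F qn (4*n+1) N \<and> cont_Rm_H (4*n+1) \<phi>}"
      by (auto simp: N0_def P0_def cont_F_Rm_def cont_Rm_H_def Rvecs_def Rnorm_def)
    have "err S (P0 \<circ> N0) F qn \<le> 0"
      unfolding err_def by (rule SUP_least) (use True in simp)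
    then have "(case (N0, P0) of (N, \<phi>) \<Rightarrow> err S (\<phi> \<circ> N) F qn) \<le> 0" by simp
    then have "e_cont (4*n+1) S F qn \<le> 0" unfolding e_cont_def by (rule INF_lower2[OF pair])
    also have "0 \<le> ereal c0 * e_non n C S F qn"
    proof (cases "e_non n C S F qn" rule: ereal_cases)
      case (real r) then show ?thesis using enn c00 by simp
    next
      case PInf then show ?thesis using c00 by (cases "c0 = 0") simp_all
    next
      case MInf then show ?thesis using enn by simp
    qed
    finally show ?thesis by (simp add: c0_def)
  next
    case False
    then obtain y :: 'h where y: "y \<noteq> 0" by blast
    obtain x where x: "y = S x" using bij by (metis bij_def surj_def)
    interpret S: bounded_linear S by (rule blS)
    have x0: "x \<noteq> 0" using x y by auto
    have blI: "bounded_linear (inv S)" by (rule bounded_linear_inverse[OF blS bij])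
    have "norm x = norm (inv S (S x))" using bij by (simp add: bij_is_inj)
    also have "\<dots> \<le> onorm (inv S) * norm (S x)" by (rule onorm[OF blI])
    also have "\<dots> \<le> onorm (inv S) * (onorm S * norm x)"
      by (rule mult_left_mono[OF onorm[OF blS] onorm_pos_le[OF blI]])
    finally have "norm x * 1 \<le> norm x * (onorm S * onorm (inv S))" by (simp add: algebra_simps)
    then have kap: "1 \<le> onorm S * onorm (inv S)" using x0 by (simp add: mult_le_cancel_left)
    have kap2: "1 \<le> (onorm S * onorm (inv S))\<^sup>2" using kap by (simp add: one_le_power)
    have c0k: "c0 = 2 * C * (onorm S * onorm (inv S))\<^sup>2" by (simp add: c0_def power_mult_distrib)
    have c0ge: "2 * C \<le> c0" unfolding c0k using kap2 C by (simp add: mult_le_cancel_left1 mult_left_le)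
    have c0pos: "c0 > 0" using c0ge C by simp
    show ?thesis
    proof (cases "e_non n C S F qn = \<infinity>")
      case True then show ?thesis using c0pos by (simp add: c0_def[symmetric])
    next
      case False
      obtain En where En: "e_non n C S F qn = ereal En" using False enn by (cases "e_non n C S F qn") auto
      have En0: "En \<ge> 0" using enn En by simp
      have s2: "sqrt 2 \<le> (2::real)"
      proof -
        have "sqrt 2 \<le> sqrt (4::real)" by (rule real_sqrt_le_mono) simp
        then show ?thesis by simp
      qed
      have s2p: "sqrt 2 > (0::real)" by simp
      have main: "e_cont (4*n+1) S F qn \<le> ereal (sqrt 2 * C * En)"
      proof (rule ereal_le_epsilon2)
        fix d :: real assume d: "d > 0"
        define \<eta> where "\<eta> = d / (2 * sqrt 2 * C)"
        have eta: "\<eta> > 0" using d C by (simp add: \<eta>_def)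
        have "e_non n C S F qn < ereal (En + \<eta>)" using En eta by simp
        then obtain h where h: "h \<in> riesz_bases_C C" "(SUP f\<in>unit_ball_F F qn. ereal (sigma_n n h (S f))) < ereal (En + \<eta>)"
          unfolding e_non_def INF_less_iff by blast
        have sig: "sigma_n n h (S f) < En + \<eta>" if f: "f \<in> unit_ball_F F qn" for f
        proof -
          have "ereal (sigma_n n h (S f)) \<le> (SUP f\<in>unit_ball_F F qn. ereal (sigma_n n h (S f)))"
            using f by (rule SUP_upper)
          then have "ereal (sigma_n n h (S f)) < ereal (En + \<eta>)" using h(2) by (rule le_less_trans)
          then show ?thesis by simp
        qed
        have "e_cont (4*n+1) S F qn \<le> ereal (sqrt 2 * C * ((En + \<eta>) + \<eta>))"
          by (rule core[OF blS qn ce C h(1) sig eta])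
        also have "sqrt 2 * C * ((En + \<eta>) + \<eta>) = sqrt 2 * C * En + d"
          using s2p C by (simp add: \<eta>_def field_simps)
        finally show "e_cont (4*n+1) S F qn \<le> ereal (sqrt 2 * C * En) + ereal d" by simp
      qed
      also have "ereal (sqrt 2 * C * En) \<le> ereal (c0 * En)"
      proof -
        have "sqrt 2 * C \<le> 2 * C" using s2 C by (intro mult_right_mono) auto
        also have "\<dots> \<le> c0" by (rule c0ge)
        finally have "sqrt 2 * C \<le> c0" .
        then show ?thesis using En0 by (simp add: mult_right_mono)
      qed
      also have "ereal (c0 * En) = ereal (2 * C * (onorm S)\<^sup>2 * (onorm (inv S))\<^sup>2) * e_non n C S F qn"
        by (simp add: En c0_def)
      finally show ?thesis .
    qed
  qed
qed


end
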